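(* Let $\mathscr{R}$ be a von Neumann algebra acting on a Hilbert space $\mathscr{H}$, with identity $I$, and let $n\ge 2$. If $T_1,\dots,T_n$ are operators in $\mathscr{R}$ such that $T_1^*T_1 + \cdots + T_n^*T_n = I$, then there are operators $S_1,\dots,S_{n-1}$ in $\mathscr{R}$ such that $T_i = S_i\sqrt{I - T_n^*T_n}$ for $1\le i\le n-1$ and $S_1^*S_1 + \cdots + S_{n-1}^*S_{n-1}$ is the range projection of $\sqrt{I - T_n^*T_n}$.
   Context: The range projection of an operator is the orthogonal projection onto the closure of its range. *)

theory Defs
  imports "HOL-Analysis.Analysis"
begin

class complex_vector = real_vector +
  fixes scaleC :: "complex \<Rightarrow> 'a \<Rightarrow> 'a"
  assumes scaleC_add_right: "scaleC a (x + y) = scaleC a x + scaleC a y"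
    and scaleC_add_left: "scaleC (a + b) x = scaleC a x + scaleC b x"
    and scaleC_scaleC: "scaleC a (scaleC b x) = scaleC (a * b) x"
    and scaleC_one: "scaleC 1 x = x"
    and scaleR_scaleC: "scaleR r x = scaleC (complex_of_real r) x"

class complex_inner = complex_vector + real_normed_vector +
  fixes cinner :: "'a \<Rightarrow> 'a \<Rightarrow> complex"
  assumes cinner_commute: "cinner x y = cnj (cinner y x)"
    and cinner_add_left: "cinner (x + y) z = cinner x z + cinner y z"
    and cinner_scaleC_left: "cinner (scaleC r x) y = cnj r * cinner x y"
    and cinner_nonneg: "Im (cinner x x) = 0 \<and> 0 \<le> Re (cinner x x)"
    and cinner_eq_zero_iff: "cinner x x = 0 \<longleftrightarrow> x = 0"
    and norm_eq_sqrt_cinner: "norm x = sqrt (Re (cinner x x))"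

class chilbert_space = complex_inner + complete_space

definition bounded_clinear :: "('a::complex_inner \<Rightarrow> 'b::complex_inner) \<Rightarrow> bool" where
  "bounded_clinear T \<longleftrightarrow>
     (\<forall>x y. T (x + y) = T x + T y) \<and> (\<forall>c x. T (scaleC c x) = scaleC c (T x)) \<and>
     (\<exists>K. \<forall>x. norm (T x) \<le> norm x * K)"

definition cadjoint :: "('a::complex_inner \<Rightarrow> 'a) \<Rightarrow> ('a \<Rightarrow> 'a)" where
  "cadjoint T = (SOME S. \<forall>x y. cinner (S x) y = cinner x (T y))"

definition commutant :: "('a::complex_inner \<Rightarrow> 'a) set \<Rightarrow> ('a \<Rightarrow> 'a) set" where
  "commutant S = {T. bounded_clinear T \<and> (\<forall>A\<in>S. T \<circ> A = A \<circ> T)}"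

definition von_neumann_algebra :: "('a::chilbert_space \<Rightarrow> 'a) set \<Rightarrow> bool" where
  "von_neumann_algebra R \<longleftrightarrow>
     R \<subseteq> {T. bounded_clinear T} \<and> id \<in> R \<and>
     (\<forall>A\<in>R. \<forall>B\<in>R. (\<lambda>x. A x + B x) \<in> R \<and> A \<circ> B \<in> R) \<and>
     (\<forall>c. \<forall>A\<in>R. (\<lambda>x. scaleC c (A x)) \<in> R) \<and>
     (\<forall>A\<in>R. cadjoint A \<in> R) \<and>
     commutant (commutant R) = R"

definition positive_op :: "('a::complex_inner \<Rightarrow> 'a) \<Rightarrow> bool" where
  "positive_op A \<longleftrightarrow> bounded_clinear A \<and>
     (\<forall>x. Im (cinner x (A x)) = 0 \<and> 0 \<le> Re (cinner x (A x)))"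

definition op_sqrt :: "('a::complex_inner \<Rightarrow> 'a) \<Rightarrow> ('a \<Rightarrow> 'a)" where
  "op_sqrt A = (THE B. positive_op B \<and> B \<circ> B = A)"

definition is_orth_proj :: "('a::complex_inner \<Rightarrow> 'a) \<Rightarrow> bool" where
  "is_orth_proj P \<longleftrightarrow> bounded_clinear P \<and> P \<circ> P = P \<and> cadjoint P = P"

definition range_proj :: "('a::complex_inner \<Rightarrow> 'a) \<Rightarrow> ('a \<Rightarrow> 'a)" where
  "range_proj A = (THE P. is_orth_proj P \<and> range P = closure (range A))"

end

theory Submission
  imports Defs
begin


lemma cinner_add_right: "cinner x (y + z) = cinner x y + cinner x (z::'a::complex_inner)"
  by (metis cinner_add_left cinner_commute complex_cnj_add)

lemma cinner_scaleC_right: "cinner x (scaleC r y) = r * cinner x (y::'a::complex_inner)"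
  by (metis cinner_commute cinner_scaleC_left complex_cnj_cnj complex_cnj_mult)

lemma cinner_zero_left[simp]: "cinner 0 (y::'a::complex_inner) = 0"
  by (metis add_0 add_cancel_left_left cinner_add_left)

lemma cinner_zero_right[simp]: "cinner x (0::'a::complex_inner) = 0"
  by (metis cinner_commute cinner_zero_left complex_cnj_zero)

lemma cinner_minus_left: "cinner (- x) (y::'a::complex_inner) = - cinner x y"
proof -
  have "- x = scaleC (complex_of_real (-1)) x" by (metis scaleR_minus1_left scaleR_scaleC)
  then show ?thesis by (simp add: cinner_scaleC_left)
qed

lemma cinner_minus_right: "cinner x (- y::'a::complex_inner) = - cinner x y"
proof -
  have "- y = scaleC (complex_of_real (-1)) y" by (metis scaleR_minus1_left scaleR_scaleC)
  then show ?thesis by (simp add: cinner_scaleC_right)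
qed

lemma cinner_diff_left: "cinner (x - z) (y::'a::complex_inner) = cinner x y - cinner z y"
  by (simp only: diff_conv_add_uminus cinner_add_left cinner_minus_left)

lemma cinner_diff_right: "cinner x (y - z::'a::complex_inner) = cinner x y - cinner x z"
  by (simp only: diff_conv_add_uminus cinner_add_right cinner_minus_right)

lemma scaleR_scaleC': "scaleC (complex_of_real r) x = scaleR r (x::'a::complex_vector)"
  by (simp add: scaleR_scaleC)

lemma cinner_scaleR_left: "cinner (scaleR r x) (y::'a::complex_inner) = complex_of_real r * cinner x y"
  by (simp add: scaleR_scaleC cinner_scaleC_left)

lemma cinner_scaleR_right: "cinner x (scaleR r y::'a::complex_inner) = complex_of_real r * cinner x y"
  by (simp add: scaleR_scaleC cinner_scaleC_right)

lemma cinner_self_real: "cinner x (x::'a::complex_inner) = complex_of_real ((norm x)^2)"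
proof -
  have "Im (cinner x x) = 0" "0 \<le> Re (cinner x x)" using cinner_nonneg by auto
  then show ?thesis using norm_eq_sqrt_cinner[of x] by (simp add: complex_eq_iff)
qed

lemma Re_cinner_self: "Re (cinner x (x::'a::complex_inner)) = (norm x)^2"
  by (simp add: cinner_self_real)

lemma cinner_ext: "(\<And>y. cinner a y = cinner b (y::'a::complex_inner)) \<Longrightarrow> a = b"
  by (metis cinner_diff_left cinner_eq_zero_iff eq_iff_diff_eq_0)

lemma cinner_ext_right: "(\<And>y. cinner y a = cinner y (b::'a::complex_inner)) \<Longrightarrow> a = b"
  by (metis cinner_commute cinner_ext)

lemma scaleC_zero_right[simp]: "scaleC c (0::'a::complex_vector) = 0"
  by (metis add_cancel_right_right scaleC_add_right)

lemma scaleC_zero_left[simp]: "scaleC 0 (x::'a::complex_vector) = 0"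
  by (metis scaleR_scaleC scaleR_zero_left of_real_0)

lemma scaleC_minus_right: "scaleC c (- x::'a::complex_vector) = - scaleC c x"
proof -
  have m: "- z = scaleC (complex_of_real (-1)) z" for z :: 'a by (metis scaleR_minus1_left scaleR_scaleC)
  show ?thesis by (simp only: m scaleC_scaleC mult.commute)
qed

lemma scaleC_diff_right: "scaleC c (x - y::'a::complex_vector) = scaleC c x - scaleC c y"
proof -
  have "scaleC c (x - y) + scaleC c y = scaleC c x" by (metis scaleC_add_right diff_add_cancel)
  then show ?thesis by (metis add_diff_cancel)
qed

lemma scaleC_diff_left: "scaleC (a - b) (x::'a::complex_vector) = scaleC a x - scaleC b x"
  by (metis add_diff_cancel_right' diff_add_cancel scaleC_add_left)

lemma norm_scaleC: "norm (scaleC c x) = cmod c * norm (x::'a::complex_inner)"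
proof -
  have "cinner (scaleC c x) (scaleC c x) = (cnj c * c) * cinner x x"
    by (simp add: cinner_scaleC_left cinner_scaleC_right)
  also have "cnj c * c = complex_of_real ((cmod c)^2)"
    by (metis complex_norm_square mult.commute of_real_power)
  finally have "(norm (scaleC c x))^2 = (cmod c)^2 * (norm x)^2"
    by (metis Re_cinner_self cinner_self_real Re_complex_of_real of_real_mult)
  then have "(norm (scaleC c x))^2 = (cmod c * norm x)^2" by (simp add: power_mult_distrib)
  then show ?thesis by (simp add: power2_eq_iff_nonneg)
qed



lemma bcl_add: "bounded_clinear T \<Longrightarrow> T (x + y) = T x + T y"
  by (simp add: bounded_clinear_def)
lemma bcl_scaleC: "bounded_clinear T \<Longrightarrow> T (scaleC c x) = scaleC c (T x)"
  by (simp add: bounded_clinear_def)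

lemma bcl_bl: assumes "bounded_clinear (T::'a::complex_inner \<Rightarrow> 'b::complex_inner)"
  shows "bounded_linear T"
proof -
  obtain K where K: "\<And>x. norm (T x) \<le> norm x * K" using assms by (auto simp: bounded_clinear_def)
  show ?thesis
  proof (rule bounded_linear_intro[of _ K])
    show "T (x + y) = T x + T y" for x y using assms by (simp add: bounded_clinear_def)
    show "T (scaleR r x) = scaleR r (T x)" for r x using assms by (simp add: bounded_clinear_def scaleR_scaleC)
    show "norm (T x) \<le> norm x * K" for x by (rule K)
  qed
qed

lemma bcl_intro:
  assumes "\<And>x y. T (x + y) = T x + T y" "\<And>c x. T (scaleC c x) = scaleC c (T x)"
    "\<And>x. norm (T x) \<le> norm x * K"
  shows "bounded_clinear T"
  using assms unfolding bounded_clinear_def by blast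

lemma cinner_scaleR_left': "cinner (scaleR r a) b = scaleR r (cinner a (b::'a::complex_inner))"
  by (simp add: cinner_scaleR_left scaleR_conv_of_real)
lemma cinner_scaleR_right': "cinner a (scaleR r b) = scaleR r (cinner a (b::'a::complex_inner))"
  by (simp add: cinner_scaleR_right scaleR_conv_of_real)

lemma proj_norm_formula:
  fixes m w :: "'a::complex_inner"
  assumes "m \<noteq> 0"
  shows "(norm (w - scaleC (cinner m w / complex_of_real ((norm m)^2)) m))^2
         = (norm w)^2 - (cmod (cinner m w))^2 / (norm m)^2"
proof -
  define a where "a = cinner m w"
  define N where "N = (norm m)^2"
  define t where "t = a / complex_of_real N"
  have N0: "N > 0" using assms by (simp add: N_def)
  have wm: "cinner w m = cnj a" by (simp add: a_def cinner_commute[of w m])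
  have mm: "cinner m m = complex_of_real N" by (simp add: N_def cinner_self_real)
  have e: "cinner (w - scaleC t m) (w - scaleC t m)
      = cinner w w - t * cinner w m - cnj t * cinner m w + cnj t * t * cinner m m"
    by (simp add: cinner_diff_left cinner_diff_right cinner_scaleC_left cinner_scaleC_right algebra_simps)
  have aa: "a * cnj a = complex_of_real ((cmod a)^2)" by (metis complex_norm_square of_real_power)
  have 1: "t * cinner w m = complex_of_real ((cmod a)^2 / N)"
    using aa N0 by (simp add: t_def wm)
  have 2: "cnj t * cinner m w = complex_of_real ((cmod a)^2 / N)"
    using aa N0 by (simp add: t_def a_def[symmetric] mult.commute)
  have 3: "cnj t * t * cinner m m = complex_of_real ((cmod a)^2 / N)"
    using aa N0 by (simp add: t_def mm power2_eq_square mult.commute mult.left_commute)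
  have X: "cinner (w - scaleC t m) (w - scaleC t m) = cinner w w - complex_of_real ((cmod a)^2 / N)"
    unfolding e 1 2 3 by simp
  have "Re (cinner (w - scaleC t m) (w - scaleC t m)) = Re (cinner w w) - (cmod a)^2 / N"
    unfolding X by simp
  then show ?thesis by (simp only: Re_cinner_self t_def a_def N_def)
qed

lemma cauchy_schwarz: "cmod (cinner x y) \<le> norm x * norm (y::'a::complex_inner)"
proof (cases "x = 0")
  case True then show ?thesis by simp
next
  case False
  have "0 \<le> (norm y)^2 - (cmod (cinner x y))^2 / (norm x)^2"
    using proj_norm_formula[OF False, of y] by (metis zero_le_power2)
  then have "(cmod (cinner x y))^2 \<le> (norm x * norm y)^2"
    using False by (simp add: field_simps power_mult_distrib)
  then show ?thesis by (rule power2_le_imp_le) simp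
qed

lemma bounded_bilinear_cinner: "bounded_bilinear (cinner :: 'a::complex_inner \<Rightarrow> 'a \<Rightarrow> complex)"
proof
  show "cinner (a + a') b = cinner a b + cinner a' b" for a a' b :: 'a by (rule cinner_add_left)
  show "cinner a (b + b') = cinner a b + cinner a b'" for a b b' :: 'a by (rule cinner_add_right)
  show "cinner (scaleR r a) b = scaleR r (cinner a b)" for r :: real and a b :: 'a by (rule cinner_scaleR_left')
  show "cinner a (scaleR r b) = scaleR r (cinner a b)" for r :: real and a b :: 'a by (rule cinner_scaleR_right')
  show "\<exists>K. \<forall>a b::'a. norm (cinner a b) \<le> norm a * norm b * K"
    using cauchy_schwarz by (intro exI[of _ 1]) auto
qed

lemmas tendsto_cinner = bounded_bilinear.tendsto[OF bounded_bilinear_cinner]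

lemma parallelogram:
  "(norm (a + b))^2 + (norm (a - b))^2 = 2 * (norm a)^2 + 2 * (norm (b::'a::complex_inner))^2"
proof -
  have E: "cinner (a + b) (a + b) + cinner (a - b) (a - b) = cinner a a + cinner a a + cinner b b + cinner b b"
    by (simp add: cinner_add_left cinner_add_right cinner_diff_left cinner_diff_right algebra_simps)
  have "Re (cinner (a + b) (a + b)) + Re (cinner (a - b) (a - b)) = 2 * Re (cinner a a) + 2 * Re (cinner b b)"
    using arg_cong[OF E, of Re] by simp
  then show ?thesis by (simp only: Re_cinner_self)
qed

definition csubspace :: "'a::complex_vector set \<Rightarrow> bool" where
  "csubspace M \<longleftrightarrow> 0 \<in> M \<and> (\<forall>x\<in>M. \<forall>y\<in>M. x + y \<in> M) \<and> (\<forall>c. \<forall>x\<in>M. scaleC c x \<in> M)"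



lemma csubspace_scaleR: "csubspace M \<Longrightarrow> x \<in> M \<Longrightarrow> scaleR r x \<in> M"
  by (simp add: csubspace_def scaleR_scaleC)
lemma csubspace_add: "csubspace M \<Longrightarrow> x \<in> M \<Longrightarrow> y \<in> M \<Longrightarrow> x + y \<in> M"
  by (simp add: csubspace_def)
lemma csubspace_scaleC: "csubspace M \<Longrightarrow> x \<in> M \<Longrightarrow> scaleC c x \<in> M"
  by (simp add: csubspace_def)
lemma csubspace_0: "csubspace M \<Longrightarrow> 0 \<in> M"
  by (simp add: csubspace_def)
lemma csubspace_minus: "csubspace M \<Longrightarrow> x \<in> M \<Longrightarrow> - x \<in> M"
  using csubspace_scaleR[of M x "-1"] by simp
lemma csubspace_diff: "csubspace M \<Longrightarrow> x \<in> M \<Longrightarrow> y \<in> M \<Longrightarrow> x - y \<in> M"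
  by (metis csubspace_add csubspace_minus diff_conv_add_uminus)

lemma proj_exists:
  fixes x :: "'a::chilbert_space"
  assumes M: "csubspace M" "closed M"
  shows "\<exists>p\<in>M. \<forall>m\<in>M. cinner m (x - p) = 0"
proof -
  define D where "D = (\<lambda>m. norm (x - m)) ` M"
  define d where "d = Inf D"
  have Dne: "D \<noteq> {}" using M by (auto simp: D_def csubspace_def)
  have Dbdd: "bdd_below D" unfolding D_def by (rule bdd_belowI[of _ 0]) auto
  have dle: "d \<le> norm (x - m)" if "m \<in> M" for m
    unfolding d_def D_def using Dbdd that by (auto intro: cInf_lower simp: D_def)
  have d0: "0 \<le> d" unfolding d_def using Dne by (auto intro!: cInf_greatest simp: D_def)
  have "\<exists>m\<in>M. (norm (x - m))^2 < d^2 + 1 / (real k + 1)" for k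
  proof -
    have "d < sqrt (d^2 + 1 / (real k + 1))"
      by (rule real_less_rsqrt) (simp add: add_pos_pos)
    then obtain v where "v \<in> D" "v < sqrt (d^2 + 1 / (real k + 1))"
      unfolding d_def using Dne by (meson cInf_lessD)
    then obtain m where m: "m \<in> M" "norm (x - m) < sqrt (d^2 + 1 / (real k + 1))"
      by (auto simp: D_def)
    then have "(norm (x - m))^2 < d^2 + 1 / (real k + 1)"
      by (metis norm_ge_zero real_sqrt_less_iff real_sqrt_abs abs_of_nonneg)
    with m show ?thesis by blast
  qed
  then obtain ms where ms: "\<And>k. ms k \<in> M" "\<And>k. (norm (x - ms k))^2 < d^2 + 1 / (real k + 1)"
    by metis
  have dist_bound: "(norm (ms j - ms k))^2 \<le> 2 / (real j + 1) + 2 / (real k + 1)" for j k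
  proof -
    have mid: "scaleR (1/2) (ms j + ms k) \<in> M"
      using M ms by (intro csubspace_scaleR csubspace_add) auto
    have "x - ms j + (x - ms k) = scaleR 2 (x - scaleR (1/2) (ms j + ms k))"
      by (simp add: algebra_simps scaleR_2)
    then have "norm (x - ms j + (x - ms k)) = 2 * norm (x - scaleR (1/2) (ms j + ms k))" by simp
    moreover have "d \<le> norm (x - scaleR (1/2) (ms j + ms k))" using dle mid by blast
    ultimately have a: "4 * d^2 \<le> (norm (x - ms j + (x - ms k)))^2"
      using d0 by (simp add: power_mult_distrib power_mono)
    have b: "(norm (x - ms j - (x - ms k)))^2 = (norm (ms j - ms k))^2"
      by (metis diff_diff_eq2 diff_add_cancel norm_minus_commute add_diff_cancel_left')
    have "(norm (x - ms j + (x - ms k)))^2 + (norm (x - ms j - (x - ms k)))^2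
        = 2 * (norm (x - ms j))^2 + 2 * (norm (x - ms k))^2" by (rule parallelogram)
    with a b ms(2)[of j] ms(2)[of k] show ?thesis by linarith
  qed
  have "Cauchy ms"
  proof (rule metric_CauchyI)
    fix e :: real assume e: "0 < e"
    obtain N :: nat where N: "4 / e^2 < real N" using reals_Archimedean2 by blast
    show "\<exists>M. \<forall>m\<ge>M. \<forall>n\<ge>M. dist (ms m) (ms n) < e"
    proof (intro exI allI impI)
      fix j k assume jk: "N \<le> j" "N \<le> k"
      have "2 / (real j + 1) \<le> 2 / (real N + 1)" "2 / (real k + 1) \<le> 2 / (real N + 1)"
        using jk by (auto intro!: divide_left_mono)
      moreover have "4 / (real N + 1) < e^2"
      proof -
        have e2: "0 < e^2" using e by simp
        have "4 < real N * e^2" using N e2 by (simp add: field_simps)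
        also have "\<dots> < (real N + 1) * e^2" using e2 by (simp add: distrib_right)
        finally show ?thesis by (simp add: field_simps)
      qed
      ultimately have "(norm (ms j - ms k))^2 < e^2" using dist_bound[of j k] by simp
      then show "dist (ms j) (ms k) < e" using e by (simp add: dist_norm power_less_imp_less_base)
    qed
  qed
  then obtain p where p: "ms \<longlonglongrightarrow> p" using Cauchy_convergent_iff convergent_def by blast
  have pM: "p \<in> M" using M(2) ms(1) p closed_sequentially by blast
  have "(\<lambda>k. (norm (x - ms k))^2) \<longlonglongrightarrow> (norm (x - p))^2"
    by (intro tendsto_intros p)
  moreover have "(\<lambda>k. d^2 + 1 / (real k + 1)) \<longlonglongrightarrow> d^2 + 0"
  proof -
    have "(\<lambda>k. 1 / (real k + 1)) \<longlonglongrightarrow> 0"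
      using LIMSEQ_inverse_real_of_nat by (simp add: inverse_eq_divide add.commute)
    then show ?thesis by (intro tendsto_intros)
  qed
  ultimately have "(norm (x - p))^2 \<le> d^2 + 0"
    by (rule LIMSEQ_le) (use ms(2) less_imp_le in blast)
  then have pmin: "(norm (x - p))^2 \<le> (norm (x - m))^2" if "m \<in> M" for m
    using dle[OF that] d0 by (smt (verit) power_mono)
  show ?thesis
  proof (intro bexI[OF _ pM] ballI)
    fix m assume mM: "m \<in> M"
    show "cinner m (x - p) = 0"
    proof (cases "m = 0")
      case True then show ?thesis by simp
    next
      case False
      define t where "t = cinner m (x - p) / complex_of_real ((norm m)^2)"
      have "p + scaleC t m \<in> M" using M pM mM by (intro csubspace_add csubspace_scaleC)
      then have A: "(norm (x - p))^2 \<le> (norm ((x - p) - scaleC t m))^2"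
        using pmin by (metis diff_diff_eq)
      have B: "(norm ((x - p) - scaleC t m))^2 = (norm (x - p))^2 - (cmod (cinner m (x - p)))^2 / (norm m)^2"
        unfolding t_def by (rule proj_norm_formula[OF False])
      from A B have "(cmod (cinner m (x - p)))^2 / (norm m)^2 \<le> 0" by linarith
      then have "(cmod (cinner m (x - p)))^2 \<le> 0" using False
        by (simp add: divide_le_0_iff)
      then show ?thesis by simp
    qed
  qed
qed



lemma riesz:
  fixes f :: "'a::chilbert_space \<Rightarrow> complex"
  assumes add: "\<And>x y. f (x + y) = f x + f y"
    and scal: "\<And>c x. f (scaleC c x) = c * f x"
    and bnd: "\<And>x. norm (f x) \<le> norm x * K"
  shows "\<exists>z. \<forall>y. f y = cinner z y"
proof (cases "\<forall>y. f y = 0")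
  case True then show ?thesis by (intro exI[of _ 0]) simp
next
  case False
  then obtain u where u: "f u \<noteq> 0" by blast
  have bl: "bounded_linear f"
  proof (rule bounded_linear_intro[of _ K])
    show "f (x + y) = f x + f y" for x y by (rule add)
    show "norm (f x) \<le> norm x * K" for x by (rule bnd)
    show "f (scaleR r x) = scaleR r (f x)" for r x
      using scal[of "complex_of_real r" x] by (simp add: scaleR_scaleC' scaleR_conv_of_real)
  qed
  define Ker where "Ker = {y. f y = 0}"
  have sub: "csubspace Ker" unfolding Ker_def csubspace_def
    by (auto simp: add scal) (metis add_cancel_right_left add mult_zero_right scal scaleC_zero_left)
  have cl: "closed Ker" unfolding Ker_def
    using bl by (intro closed_Collect_eq continuous_intros) (auto intro: linear_continuous_on bounded_linear.continuous_on[OF bl])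
  obtain p where p: "p \<in> Ker" "\<And>m. m \<in> Ker \<Longrightarrow> cinner m (u - p) = 0"
    using proj_exists[OF sub cl, of u] by blast
  define w where "w = u - p"
  have fw: "f w = f u" using p(1) bl by (simp add: w_def Ker_def linear_diff bounded_linear.linear)
  have w0: "w \<noteq> 0" using fw u by (metis bl bounded_linear.linear linear_0)
  have orth: "\<And>m. m \<in> Ker \<Longrightarrow> cinner w m = 0"
    using p(2) by (metis cinner_commute complex_cnj_zero w_def)
  define z where "z = scaleC (cnj (f w) / complex_of_real ((norm w)^2)) w"
  show ?thesis
  proof (intro exI allI)
    fix y
    have "y - scaleC (f y / f w) w \<in> Ker"
      using fw u bl by (simp add: Ker_def linear_diff bounded_linear.linear scal)
    then have "cinner w (y - scaleC (f y / f w) w) = 0" by (rule orth)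
    then have "cinner w y = (f y / f w) * complex_of_real ((norm w)^2)"
      by (simp add: cinner_diff_right cinner_scaleC_right cinner_self_real)
    then show "f y = cinner z y"
      using w0 fw u by (simp add: z_def cinner_scaleC_left field_simps)
  qed
qed

lemma adjoint_exists:
  fixes T :: "'a::chilbert_space \<Rightarrow> 'a"
  assumes T: "bounded_clinear T"
  shows "\<exists>S. \<forall>x y. cinner (S x) y = cinner x (T y)"
proof -
  obtain K where K: "\<And>x. norm (T x) \<le> norm x * K" using T by (auto simp: bounded_clinear_def)
  have "\<exists>z. \<forall>y. cinner x (T y) = cinner z y" for x
  proof (rule riesz[of _ "norm x * K"])
    show "cinner x (T (y1 + y2)) = cinner x (T y1) + cinner x (T y2)" for y1 y2
      using T by (simp add: bcl_add cinner_add_right)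
    show "cinner x (T (scaleC c y)) = c * cinner x (T y)" for c y
      using T by (simp add: bcl_scaleC cinner_scaleC_right)
    show "norm (cinner x (T y)) \<le> norm y * (norm x * K)" for y
      using cauchy_schwarz[of x "T y"] K[of y]
      by (smt (verit, ccfv_SIG) mult.commute mult.left_commute mult_left_mono norm_ge_zero)
  qed
  then show ?thesis by metis
qed

lemma cadjoint_prop:
  fixes T :: "'a::chilbert_space \<Rightarrow> 'a"
  assumes T: "bounded_clinear T"
  shows "cinner (cadjoint T x) y = cinner x (T y)"
proof -
  from adjoint_exists[OF T] have "\<forall>x y. cinner (cadjoint T x) y = cinner x (T y)"
    unfolding cadjoint_def by (rule someI_ex)
  then show ?thesis by blast
qed

lemma cadjoint_prop':
  fixes T :: "'a::chilbert_space \<Rightarrow> 'a"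
  assumes T: "bounded_clinear T"
  shows "cinner y (cadjoint T x) = cinner (T y) x"
  by (metis T cadjoint_prop cinner_commute)

lemma cadjoint_eqI:
  fixes T :: "'a::complex_inner \<Rightarrow> 'a"
  assumes "\<And>x y. cinner (S x) y = cinner x (T y)"
  shows "cadjoint T = S"
proof -
  have "\<forall>x y. cinner (cadjoint T x) y = cinner x (T y)"
    unfolding cadjoint_def by (rule someI[of _ S]) (use assms in blast)
  then show ?thesis using assms by (intro ext cinner_ext) metis
qed

lemma cadjoint_bcl:
  fixes T :: "'a::chilbert_space \<Rightarrow> 'a"
  assumes T: "bounded_clinear T"
  shows "bounded_clinear (cadjoint T)"
proof -
  obtain K where K: "\<And>x. norm (T x) \<le> norm x * K" using T by (auto simp: bounded_clinear_def)
  note P = cadjoint_prop[OF T]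
  show ?thesis
  proof (rule bcl_intro[of _ "max K 0"])
    show "cadjoint T (x + y) = cadjoint T x + cadjoint T y" for x y
      by (rule cinner_ext) (simp add: P cinner_add_left)
    show "cadjoint T (scaleC c x) = scaleC c (cadjoint T x)" for c x
      by (rule cinner_ext) (simp add: P cinner_scaleC_left)
    show "norm (cadjoint T x) \<le> norm x * max K 0" for x
    proof -
      let ?s = "cadjoint T x"
      have "(norm ?s)^2 = Re (cinner x (T ?s))" using P[of x ?s] by (simp flip: Re_cinner_self)
      also have "\<dots> \<le> cmod (cinner x (T ?s))" by (rule complex_Re_le_cmod)
      also have "\<dots> \<le> norm x * norm (T ?s)" by (rule cauchy_schwarz)
      also have "\<dots> \<le> norm x * (norm ?s * max K 0)"
      proof -
        have "norm (T ?s) \<le> norm ?s * max K 0"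
          using K[of ?s] mult_left_mono[OF max.cobounded1[of K 0] norm_ge_zero[of ?s]] by linarith
        then show ?thesis by (rule mult_left_mono) simp
      qed
      finally have "(norm ?s)^2 \<le> norm ?s * (norm x * max K 0)" by (simp add: algebra_simps)
      then show ?thesis
      proof (cases "norm ?s = 0")
        case True then show ?thesis by simp
      next
        case False
        then have "norm ?s * norm ?s \<le> norm ?s * (norm x * max K 0)"
          using \<open>(norm ?s)^2 \<le> _\<close> by (simp add: power2_eq_square)
        then show ?thesis using False by (simp add: mult_le_cancel_left_pos)
      qed
    qed
  qed
qed



definition herm :: "('a::complex_inner \<Rightarrow> 'a) \<Rightarrow> bool" where
  "herm D \<longleftrightarrow> (\<forall>u v. cinner (D u) v = cinner u (D v))"

definition posf :: "('a::complex_inner \<Rightarrow> 'a) \<Rightarrow> bool" where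
  "posf D \<longleftrightarrow> (\<forall>x. 0 \<le> Re (cinner x (D x)))"

lemma bcl_id: "bounded_clinear (\<lambda>x::'a::complex_inner. x)"
  by (rule bcl_intro[of _ 1]) auto

lemma bcl_comp: assumes "bounded_clinear F" "bounded_clinear G"
  shows "bounded_clinear (\<lambda>x. F (G x))"
proof -
  obtain K where K: "\<And>x. norm (F x) \<le> norm x * K" using assms by (auto simp: bounded_clinear_def)
  obtain L where L: "\<And>x. norm (G x) \<le> norm x * L" using assms by (auto simp: bounded_clinear_def)
  show ?thesis
  proof (rule bcl_intro[of _ "max L 0 * max K 0"])
    show "F (G (x + y)) = F (G x) + F (G y)" for x y using assms by (simp add: bcl_add)
    show "F (G (scaleC c x)) = scaleC c (F (G x))" for c x using assms by (simp add: bcl_scaleC)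
    show "norm (F (G x)) \<le> norm x * (max L 0 * max K 0)" for x
    proof -
      have "norm (F (G x)) \<le> norm (G x) * max K 0"
        using K[of "G x"] mult_left_mono[OF max.cobounded1[of K 0] norm_ge_zero[of "G x"]] by linarith
      also have "norm (G x) \<le> norm x * max L 0"
        using L[of x] mult_left_mono[OF max.cobounded1[of L 0] norm_ge_zero[of x]] by linarith
      then have "norm (G x) * max K 0 \<le> norm x * max L 0 * max K 0"
        by (rule mult_right_mono) simp
      finally show ?thesis by (simp add: mult.assoc)
    qed
  qed
qed

lemma bcl_comp': "bounded_clinear F \<Longrightarrow> bounded_clinear G \<Longrightarrow> bounded_clinear (F \<circ> G)"
  using bcl_comp[of F G] by (simp add: comp_def)

lemma bcl_plus: assumes "bounded_clinear F" "bounded_clinear G"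
  shows "bounded_clinear (\<lambda>x. F x + G x)"
proof -
  obtain K where K: "\<And>x. norm (F x) \<le> norm x * K" using assms by (auto simp: bounded_clinear_def)
  obtain L where L: "\<And>x. norm (G x) \<le> norm x * L" using assms by (auto simp: bounded_clinear_def)
  show ?thesis
  proof (rule bcl_intro[of _ "K + L"])
    show "F (x + y) + G (x + y) = F x + G x + (F y + G y)" for x y using assms by (simp add: bcl_add algebra_simps)
    show "F (scaleC c x) + G (scaleC c x) = scaleC c (F x + G x)" for c x
      using assms by (simp add: bcl_scaleC scaleC_add_right)
    show "norm (F x + G x) \<le> norm x * (K + L)" for x
      using norm_triangle_ineq[of "F x" "G x"] K[of x] L[of x] by (simp add: distrib_left)
  qed
qed

lemma bcl_minus: assumes "bounded_clinear F" "bounded_clinear G"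
  shows "bounded_clinear (\<lambda>x. F x - G x)"
proof -
  obtain K where K: "\<And>x. norm (F x) \<le> norm x * K" using assms by (auto simp: bounded_clinear_def)
  obtain L where L: "\<And>x. norm (G x) \<le> norm x * L" using assms by (auto simp: bounded_clinear_def)
  show ?thesis
  proof (rule bcl_intro[of _ "K + L"])
    show "F (x + y) - G (x + y) = F x - G x + (F y - G y)" for x y using assms by (simp add: bcl_add algebra_simps)
    show "F (scaleC c x) - G (scaleC c x) = scaleC c (F x - G x)" for c x
      using assms by (simp add: bcl_scaleC scaleC_diff_right)
    show "norm (F x - G x) \<le> norm x * (K + L)" for x
      using norm_triangle_ineq4[of "F x" "G x"] K[of x] L[of x] by (simp add: distrib_left)
  qed
qed

lemma bcl_scaleR: assumes "bounded_clinear F"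
  shows "bounded_clinear (\<lambda>x. scaleR r (F x))"
proof -
  obtain K where K: "\<And>x. norm (F x) \<le> norm x * K" using assms by (auto simp: bounded_clinear_def)
  show ?thesis
  proof (rule bcl_intro[of _ "\<bar>r\<bar> * K"])
    show "scaleR r (F (x + y)) = scaleR r (F x) + scaleR r (F y)" for x y
      using assms by (simp add: bcl_add scaleR_add_right)
    show "scaleR r (F (scaleC c x)) = scaleC c (scaleR r (F x))" for c x
      using assms by (simp add: bcl_scaleC scaleR_scaleC scaleC_scaleC mult.commute)
    show "norm (scaleR r (F x)) \<le> norm x * (\<bar>r\<bar> * K)" for x
      using K[of x] mult_left_mono[OF K[of x], of "\<bar>r\<bar>"] by (simp add: mult.left_commute)
  qed
qed

lemma bcl_zero: "bounded_clinear (\<lambda>x::'a::complex_inner. 0::'b::complex_inner)"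
  by (rule bcl_intro[of _ 0]) auto

lemma bcl_diff: "bounded_clinear T \<Longrightarrow> T (x - y) = T x - T y"
  using bcl_bl[of T] by (simp add: bounded_linear.linear linear_diff)
lemma bcl_0: "bounded_clinear T \<Longrightarrow> T 0 = 0"
  using bcl_bl[of T] by (simp add: bounded_linear.linear linear_0)
lemma bcl_scaleR_app: "bounded_clinear T \<Longrightarrow> T (scaleR r x) = scaleR r (T x)"
  by (simp add: bcl_scaleC scaleR_scaleC)
lemma bcl_sum: "bounded_clinear T \<Longrightarrow> T (sum f A) = sum (\<lambda>i. T (f i)) A"
  using bcl_bl[of T] by (simp add: bounded_linear.linear linear_sum)
lemma bcl_tendsto: "bounded_clinear T \<Longrightarrow> (f \<longlongrightarrow> l) F \<Longrightarrow> ((\<lambda>k. T (f k)) \<longlongrightarrow> T l) F"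
  using bcl_bl[of T] bounded_linear.tendsto by blast
lemma bcl_cont: "bounded_clinear T \<Longrightarrow> continuous_on S T"
  using bcl_bl[of T] bounded_linear.continuous_on[of T] continuous_on_id by blast

lemma polarization_herm:
  fixes C :: "'a::complex_inner \<Rightarrow> 'a"
  assumes C: "bounded_clinear C" and re: "\<And>x. Im (cinner x (C x)) = 0"
  shows "herm C"
proof -
  define f where "f u v = cinner u (C v) - cinner (C u) v" for u v
  have diag: "f w w = 0" for w
  proof -
    have "cinner (C w) w = cnj (cinner w (C w))" by (rule cinner_commute)
    also have "\<dots> = cinner w (C w)" using re[of w] by (simp add: complex_eq_iff)
    finally show ?thesis by (simp add: f_def)
  qed
  have addf: "f (u + v) (u + v) = f u u + f u v + f v u + f v v" for u v
    by (simp add: f_def bcl_add[OF C] cinner_add_left cinner_add_right algebra_simps)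
  have sclf: "f (u + scaleC \<i> v) (u + scaleC \<i> v) = f u u + \<i> * f u v - \<i> * f v u + f v v" for u v
    by (simp add: f_def bcl_add[OF C] bcl_scaleC[OF C] cinner_add_left cinner_add_right
        cinner_scaleC_left cinner_scaleC_right algebra_simps)
  show ?thesis unfolding herm_def
  proof (intro allI)
    fix u v
    have 1: "f u v + f v u = 0" using addf[of u v] diag by simp
    have 2: "\<i> * f u v - \<i> * f v u = 0" using sclf[of u v] diag by simp
    have "\<i> * (f u v - f v u) = 0" using 2 by (simp add: right_diff_distrib)
    then have "f u v - f v u = 0" by simp
    then have "f u v = 0" using 1 by (simp add: eq_neg_iff_add_eq_0[symmetric])
    then show "cinner (C u) v = cinner u (C v)" by (simp add: f_def)
  qed
qed

lemma herm_Im: "herm D \<Longrightarrow> Im (cinner x (D x)) = 0"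
proof -
  assume h: "herm D"
  have "cinner x (D x) = cinner (D x) x" using h by (simp add: herm_def)
  also have "\<dots> = cnj (cinner x (D x))" by (rule cinner_commute)
  finally show ?thesis by (simp add: complex_eq_iff)
qed

lemma gen_cs:
  fixes D :: "'a::complex_inner \<Rightarrow> 'a"
  assumes D: "bounded_clinear D" and h: "herm D" and p: "posf D"
  shows "2 * t * (norm (D x))^2 \<le> Re (cinner x (D x)) + t^2 * Re (cinner (D x) (D (D x)))"
proof -
  define y where "y = x - scaleR t (D x)"
  have "cinner y (D y) = cinner x (D x) - complex_of_real t * cinner x (D (D x))
      - complex_of_real t * cinner (D x) (D x) + complex_of_real t * complex_of_real t * cinner (D x) (D (D x))"
    by (simp add: y_def bcl_diff[OF D] bcl_scaleR_app[OF D] cinner_diff_left cinner_diff_right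
        cinner_scaleR_left cinner_scaleR_right algebra_simps)
  also have "cinner x (D (D x)) = cinner (D x) (D x)" using h by (simp add: herm_def)
  finally have "Re (cinner y (D y)) = Re (cinner x (D x)) - 2 * t * (norm (D x))^2 + t^2 * Re (cinner (D x) (D (D x)))"
    by (simp add: Re_cinner_self power2_eq_square)
  moreover have "0 \<le> Re (cinner y (D y))" using p by (simp add: posf_def)
  ultimately show ?thesis by linarith
qed

lemma cs_le_one:
  fixes D :: "'a::complex_inner \<Rightarrow> 'a"
  assumes D: "bounded_clinear D" and h: "herm D" and p: "posf D"
    and le: "\<And>y. Re (cinner y (D y)) \<le> (norm y)^2"
  shows "(norm (D x))^2 \<le> Re (cinner x (D x))" and "norm (D x) \<le> norm x"
proof -
  show 1: "(norm (D x))^2 \<le> Re (cinner x (D x))"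
    using gen_cs[OF D h p, of 1 x] le[of "D x"] by simp
  then have "(norm (D x))^2 \<le> (norm x)^2" using le[of x] by linarith
  then show "norm (D x) \<le> norm x" by (rule power2_le_imp_le) simp
qed

lemma cs_zero:
  fixes D :: "'a::complex_inner \<Rightarrow> 'a"
  assumes D: "bounded_clinear D" and h: "herm D" and p: "posf D"
    and z: "Re (cinner x (D x)) = 0"
  shows "D x = 0"
proof (rule ccontr)
  assume "D x \<noteq> 0"
  define s where "s = (norm (D x))^2"
  define Q where "Q = Re (cinner (D x) (D (D x)))"
  have s0: "s > 0" using \<open>D x \<noteq> 0\<close> by (simp add: s_def)
  have Q0: "Q \<ge> 0" using p by (simp add: posf_def Q_def)
  define t where "t = s / (Q + 1)"
  have t0: "t > 0" using s0 Q0 by (simp add: t_def)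
  have "2 * t * s \<le> t^2 * Q" using gen_cs[OF D h p, of t x] z by (simp add: s_def Q_def)
  then have "2 * s \<le> t * Q" using t0 by (simp add: power2_eq_square mult.assoc)
  also have "t * Q < s" using s0 Q0 by (simp add: t_def field_simps)
  finally show False using s0 by simp
qed



definition levB :: "('a::complex_inner \<Rightarrow> 'a) \<Rightarrow> (real \<times> nat) list \<Rightarrow> 'a \<Rightarrow> 'a" where
  "levB B L x = sum_list (map (\<lambda>(c,e). scaleR c ((B ^^ e) x)) L)"

definition prodL :: "(real \<times> nat) list \<Rightarrow> (real \<times> nat) list \<Rightarrow> (real \<times> nat) list" where
  "prodL L1 L2 = concat (map (\<lambda>(c,e). map (\<lambda>(d,f). (c * d, e + f)) L2) L1)"

definition halfL :: "(real \<times> nat) list \<Rightarrow> (real \<times> nat) list" where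
  "halfL L = map (\<lambda>(c,e). (c / 2, e)) L"

definition nonneg :: "(real \<times> nat) list \<Rightarrow> bool" where
  "nonneg L \<longleftrightarrow> (\<forall>p\<in>set L. 0 \<le> fst p)"

lemma levB_Nil[simp]: "levB B [] x = 0" by (simp add: levB_def)
lemma levB_Cons[simp]: "levB B ((c,e) # L) x = scaleR c ((B ^^ e) x) + levB B L x"
  by (simp add: levB_def)
lemma levB_append[simp]: "levB B (L1 @ L2) x = levB B L1 x + levB B L2 x"
  by (simp add: levB_def)
lemma levB_halfL: "levB B (halfL L) x = scaleR (1/2) (levB B L x)"
  by (induction L) (auto simp: halfL_def scaleR_add_right)

lemma nonneg_Cons[simp]: "nonneg ((c,e) # L) \<longleftrightarrow> 0 \<le> c \<and> nonneg L"
  by (auto simp: nonneg_def)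
lemma nonneg_append[simp]: "nonneg (L1 @ L2) \<longleftrightarrow> nonneg L1 \<and> nonneg L2"
  by (auto simp: nonneg_def)
lemma nonneg_halfL: "nonneg L \<Longrightarrow> nonneg (halfL L)"
  by (auto simp: nonneg_def halfL_def)
lemma nonneg_prodL: "nonneg L1 \<Longrightarrow> nonneg L2 \<Longrightarrow> nonneg (prodL L1 L2)"
  by (auto simp: nonneg_def prodL_def) (metis fst_conv mult_nonneg_nonneg)
lemma nonneg_Nil[simp]: "nonneg []" by (simp add: nonneg_def)

locale sqB =
  fixes B :: "'a::chilbert_space \<Rightarrow> 'a"
  assumes B: "bounded_clinear B" and hB: "herm B" and pB: "posf B"
    and leB: "\<And>x. Re (cinner x (B x)) \<le> (norm x)^2"
begin

lemma pow_bcl: "bounded_clinear (B ^^ e)"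
proof (induction e)
  case 0 then show ?case using bcl_id by (simp add: id_def)
next
  case (Suc e) then show ?case using bcl_comp[OF B Suc] by (simp add: comp_def)
qed

lemma lev_bcl: "bounded_clinear (levB B L)"
proof (induction L)
  case Nil then show ?case using bcl_zero by (simp add: levB_def[abs_def])
next
  case (Cons p L)
  obtain c e where p: "p = (c,e)" by fastforce
  have "levB B (p # L) = (\<lambda>x. scaleR c ((B ^^ e) x) + levB B L x)" by (simp add: p fun_eq_iff)
  then show ?case using bcl_plus[OF bcl_scaleR[OF pow_bcl] Cons] by simp
qed

lemma pow_comm: assumes C: "bounded_clinear C" and cb: "\<And>x. C (B x) = B (C x)"
  shows "C ((B ^^ e) x) = (B ^^ e) (C x)"
  by (induction e) (auto simp: cb)

lemma lev_comm: assumes C: "bounded_clinear C" and cb: "\<And>x. C (B x) = B (C x)"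
  shows "C (levB B L x) = levB B L (C x)"
proof (induction L)
  case Nil then show ?case using bcl_0[OF C] by simp
next
  case (Cons p L)
  obtain c e where p: "p = (c,e)" by fastforce
  show ?case using Cons by (simp add: p bcl_add[OF C] bcl_scaleR_app[OF C] pow_comm[OF C cb])
qed

lemma lev_map_shift: "levB B (map (\<lambda>(d,f). (c * d, e + f)) L) x = scaleR c ((B ^^ e) (levB B L x))"
proof (induction L)
  case Nil then show ?case using bcl_0[OF pow_bcl] by simp
next
  case (Cons p L)
  obtain d f where p: "p = (d,f)" by fastforce
  show ?case using Cons
    by (simp add: p bcl_add[OF pow_bcl] bcl_scaleR_app[OF pow_bcl] funpow_add scaleR_add_right)
qed

lemma lev_prodL: "levB B (prodL L1 L2) x = levB B L1 (levB B L2 x)"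
proof (induction L1)
  case Nil then show ?case by (simp add: prodL_def)
next
  case (Cons p L1)
  obtain c e where p: "p = (c,e)" by fastforce
  have "prodL (p # L1) L2 = map (\<lambda>(d,f). (c * d, e + f)) L2 @ prodL L1 L2"
    by (simp add: prodL_def p)
  then show ?case using Cons by (simp add: p lev_map_shift)
qed

lemma pow_herm: "herm (B ^^ e)"
proof (induction e)
  case 0 then show ?case by (simp add: herm_def)
next
  case (Suc e)
  show ?case unfolding herm_def
  proof (intro allI)
    fix u v
    have "cinner ((B ^^ Suc e) u) v = cinner (B ((B ^^ e) u)) v" by simp
    also have "\<dots> = cinner ((B ^^ e) u) (B v)" using hB by (simp add: herm_def)
    also have "\<dots> = cinner u ((B ^^ e) (B v))" using Suc by (simp add: herm_def)
    also have "(B ^^ e) (B v) = (B ^^ Suc e) v" by (simp add: funpow_swap1)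
    finally show "cinner ((B ^^ Suc e) u) v = cinner u ((B ^^ Suc e) v)" .
  qed
qed

lemma lev_herm: "herm (levB B L)"
proof (induction L)
  case Nil then show ?case by (simp add: herm_def)
next
  case (Cons p L)
  obtain c e where p: "p = (c,e)" by fastforce
  show ?case using Cons pow_herm
    by (simp add: herm_def p cinner_add_left cinner_add_right cinner_scaleR_left cinner_scaleR_right)
qed

lemma pow_pos: "0 \<le> Re (cinner x ((B ^^ e) x))"
proof -
  define j where "j = e div 2"
  have "e = j + j \<or> e = j + Suc j" unfolding j_def by presburger
  then show ?thesis
  proof
    assume e: "e = j + j"
    have "cinner x ((B ^^ e) x) = cinner x ((B ^^ j) ((B ^^ j) x))" by (simp add: e funpow_add)
    also have "\<dots> = cinner ((B ^^ j) x) ((B ^^ j) x)" using pow_herm[of j] by (simp add: herm_def)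
    finally show ?thesis by (simp add: Re_cinner_self)
  next
    assume e: "e = j + Suc j"
    have "cinner x ((B ^^ e) x) = cinner x ((B ^^ j) (B ((B ^^ j) x)))"
      by (simp add: e funpow_add funpow_swap1)
    also have "\<dots> = cinner ((B ^^ j) x) (B ((B ^^ j) x))" using pow_herm[of j] by (simp add: herm_def)
    finally show ?thesis using pB by (simp add: posf_def)
  qed
qed

lemma lev_pos: "nonneg L \<Longrightarrow> posf (levB B L)"
proof (induction L)
  case Nil then show ?case by (simp add: posf_def)
next
  case (Cons p L)
  obtain c e where p: "p = (c,e)" by fastforce
  have c: "0 \<le> c" and L: "nonneg L" using Cons.prems by (auto simp: p)
  show ?case unfolding posf_def
  proof
    fix x
    have "Re (cinner x (levB B (p # L) x)) = c * Re (cinner x ((B ^^ e) x)) + Re (cinner x (levB B L x))"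
      by (simp add: p cinner_add_right cinner_scaleR_right)
    moreover have "0 \<le> c * Re (cinner x ((B ^^ e) x))" using c pow_pos by simp
    moreover have "0 \<le> Re (cinner x (levB B L x))" using Cons.IH[OF L] by (simp add: posf_def)
    ultimately show "0 \<le> Re (cinner x (levB B (p # L) x))" by linarith
  qed
qed

primrec Lz :: "nat \<Rightarrow> (real \<times> nat) list" where
  "Lz 0 = []"
| "Lz (Suc k) = halfL ((1,1) # prodL (Lz k) (Lz k))"

definition Z :: "nat \<Rightarrow> 'a \<Rightarrow> 'a" where "Z k = levB B (Lz k)"

lemma Z_bcl: "bounded_clinear (Z k)" by (simp add: Z_def lev_bcl)
lemma Z_herm: "herm (Z k)" by (simp add: Z_def lev_herm)
lemma Lz_nonneg: "nonneg (Lz k)"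
  by (induction k) (auto intro!: nonneg_halfL nonneg_prodL)
lemma Z_pos: "posf (Z k)" by (simp add: Z_def lev_pos Lz_nonneg)
lemma Z_0: "Z 0 x = 0" by (simp add: Z_def)
lemma Z_Suc: "Z (Suc k) x = scaleR (1/2) (B x + Z k (Z k x))"
  by (simp add: Z_def levB_halfL lev_prodL)

lemma Z_comm: assumes C: "bounded_clinear C" and cb: "\<And>x. C (B x) = B (C x)"
  shows "C (Z k x) = Z k (C x)"
  by (simp add: Z_def lev_comm[OF C cb])

lemma Z_comm_B: "B (Z k x) = Z k (B x)"
  by (rule Z_comm[OF B]) simp

lemma Z_Z_comm: "Z j (Z k x) = Z k (Z j x)"
  by (rule Z_comm[OF Z_bcl]) (simp add: Z_comm_B)

lemma Z_incr: "\<exists>L. nonneg L \<and> (\<forall>x. Z (Suc k) x - Z k x = levB B L x)"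
proof (induction k)
  case 0
  show ?case
  proof (intro exI[of _ "Lz 1"] conjI allI)
    show "nonneg (Lz 1)" by (rule Lz_nonneg)
    fix x show "Z (Suc 0) x - Z 0 x = levB B (Lz 1) x" by (simp add: Z_def)
  qed
next
  case (Suc k)
  then obtain L where L: "nonneg L" "\<And>x. Z (Suc k) x - Z k x = levB B L x" by blast
  show ?case
  proof (intro exI conjI allI)
    show "nonneg (halfL (prodL (Lz (Suc k) @ Lz k) L))"
      using L(1) by (intro nonneg_halfL nonneg_prodL) (simp_all add: Lz_nonneg del: Lz.simps)
    fix x
    have "Z (Suc (Suc k)) x - Z (Suc k) x
        = scaleR (1/2) (Z (Suc k) (Z (Suc k) x) - Z k (Z k x))"
      by (simp add: Z_Suc scaleR_diff_right[symmetric])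
    also have "Z (Suc k) (Z (Suc k) x) - Z k (Z k x)
        = Z (Suc k) (Z (Suc k) x - Z k x) + Z k (Z (Suc k) x - Z k x)"
      using Z_Z_comm[of k "Suc k" x] by (simp add: bcl_diff[OF Z_bcl])
    also have "\<dots> = levB B (prodL (Lz (Suc k) @ Lz k) L) x"
      by (simp add: lev_prodL L(2) flip: Z_def del: Lz.simps)
    finally show "Z (Suc (Suc k)) x - Z (Suc k) x = levB B (halfL (prodL (Lz (Suc k) @ Lz k) L)) x"
      by (simp add: levB_halfL)
  qed
qed

lemma Z_le_all: "\<forall>y. Re (cinner y (Z k y)) \<le> (norm y)^2"
proof (induction k)
  case 0 then show ?case by (simp add: Z_0)
next
  case (Suc k)
  show ?case
  proof
  fix y
  have n: "norm (Z k y) \<le> norm y" using cs_le_one(2)[OF Z_bcl Z_herm Z_pos] Suc.IH by blast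
  have a: "Re (cinner y (Z (Suc k) y)) = (Re (cinner y (B y)) + Re (cinner y (Z k (Z k y)))) / 2"
    by (simp add: Z_Suc cinner_scaleR_right cinner_add_right)
  have b: "cinner y (Z k (Z k y)) = cinner (Z k y) (Z k y)" using Z_herm[of k] by (simp add: herm_def)
  have c: "Re (cinner y (Z k (Z k y))) = (norm (Z k y))^2" unfolding b by (rule Re_cinner_self)
  have d: "(norm (Z k y))^2 \<le> (norm y)^2" using n by (simp add: power_mono)
  have "Re (cinner y (Z (Suc k) y)) = (Re (cinner y (B y)) + (norm (Z k y))^2) / 2"
    using a c by simp
  also have "\<dots> \<le> ((norm y)^2 + (norm y)^2) / 2"
    using d leB[of y] by (intro divide_right_mono add_mono) auto
  finally show "Re (cinner y (Z (Suc k) y)) \<le> (norm y)^2" by simp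
  qed
qed

lemma Z_le: "Re (cinner y (Z k y)) \<le> (norm y)^2" using Z_le_all by blast

lemma Z_norm: "norm (Z k y) \<le> norm y"
  using cs_le_one(2)[OF Z_bcl Z_herm Z_pos Z_le] .

lemma Z_mono: "k \<le> l \<Longrightarrow> Re (cinner x (Z k x)) \<le> Re (cinner x (Z l x))"
proof (induction l rule: dec_induct)
  case base then show ?case by simp
next
  case (step l)
  obtain L where L: "nonneg L" "\<And>x. Z (Suc l) x - Z l x = levB B L x" using Z_incr by blast
  have "0 \<le> Re (cinner x (levB B L x))" using lev_pos[OF L(1)] by (simp add: posf_def)
  also have "levB B L x = Z (Suc l) x - Z l x" using L(2) by simp
  finally show ?case using step.IH by (simp add: cinner_diff_right)
qed

end


lemma bcl_scaleC_op: "bounded_clinear (\<lambda>x::'a::complex_inner. scaleC c x)"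
  by (rule bcl_intro[of _ "cmod c"])
     (auto simp: scaleC_add_right scaleC_scaleC mult.commute norm_scaleC)

context sqB begin

lemma Z_diff_sq:
  assumes "n \<le> m"
  shows "(norm (Z m x - Z n x))^2 \<le> Re (cinner x (Z m x)) - Re (cinner x (Z n x))"
proof -
  define E where "E y = Z m y - Z n y" for y
  have Eb: "bounded_clinear E" unfolding E_def by (intro bcl_minus Z_bcl)
  have Eh: "herm E" using Z_herm[of m] Z_herm[of n]
    by (simp add: herm_def E_def cinner_diff_left cinner_diff_right)
  have Er: "Re (cinner y (E y)) = Re (cinner y (Z m y)) - Re (cinner y (Z n y))" for y
    by (simp add: E_def cinner_diff_right)
  have Ep: "posf E" unfolding posf_def Er using Z_mono[OF assms] by simp
  have Ele: "Re (cinner y (E y)) \<le> (norm y)^2" for y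
    unfolding Er using Z_le[of y m] Z_pos[of n] by (simp add: posf_def) (smt (verit))
  show ?thesis using cs_le_one(1)[OF Eb Eh Ep Ele, of x] by (simp add: E_def cinner_diff_right)
qed

lemma Z_Cauchy: "Cauchy (\<lambda>k. Z k x)"
proof -
  define a where "a k = Re (cinner x (Z k x))" for k
  have "incseq a" unfolding a_def by (intro incseq_SucI) (simp add: Z_mono)
  moreover have "\<forall>i. a i \<le> (norm x)^2" by (simp add: a_def Z_le)
  ultimately obtain L where "a \<longlonglongrightarrow> L" using incseq_convergent by blast
  then have Ca: "Cauchy a" by (rule LIMSEQ_imp_Cauchy)
  show ?thesis
  proof (rule metric_CauchyI)
    fix e :: real assume e: "0 < e"
    then have "0 < e^2" by simp
    then obtain N where N: "\<And>m n. N \<le> m \<Longrightarrow> N \<le> n \<Longrightarrow> dist (a m) (a n) < e^2"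
      using Ca unfolding Cauchy_def by blast
    show "\<exists>M. \<forall>m\<ge>M. \<forall>n\<ge>M. dist (Z m x) (Z n x) < e"
    proof (intro exI allI impI)
      fix m n assume mn: "N \<le> m" "N \<le> n"
      have "(norm (Z m x - Z n x))^2 < e^2"
      proof (cases "n \<le> m")
        case True
        then show ?thesis using Z_diff_sq[OF True, of x] N[OF mn] by (simp add: a_def dist_real_def)
      next
        case False
        then have "m \<le> n" by simp
        then show ?thesis using Z_diff_sq[of m n x] N[OF mn] norm_minus_commute[of "Z m x" "Z n x"]
          by (simp add: a_def dist_real_def)
      qed
      then show "dist (Z m x) (Z n x) < e" using e by (simp add: dist_norm power_less_imp_less_base)
    qed
  qed
qed

definition Zl :: "'a \<Rightarrow> 'a" where "Zl x = lim (\<lambda>k. Z k x)"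

lemma Zl_lim: "(\<lambda>k. Z k x) \<longlonglongrightarrow> Zl x"
  unfolding Zl_def using Z_Cauchy Cauchy_convergent_iff convergent_LIMSEQ_iff by blast

lemma Zl_bcl: "bounded_clinear Zl"
proof (rule bcl_intro[of _ 1])
  fix x y
  have "(\<lambda>k. Z k (x + y)) \<longlonglongrightarrow> Zl x + Zl y"
    using tendsto_add[OF Zl_lim[of x] Zl_lim[of y]] by (simp add: bcl_add[OF Z_bcl])
  then show "Zl (x + y) = Zl x + Zl y" using Zl_lim LIMSEQ_unique by blast
next
  fix c x
  have "(\<lambda>k. Z k (scaleC c x)) \<longlonglongrightarrow> scaleC c (Zl x)"
    using bcl_tendsto[OF bcl_scaleC_op Zl_lim[of x]] by (simp add: bcl_scaleC[OF Z_bcl])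
  then show "Zl (scaleC c x) = scaleC c (Zl x)" using Zl_lim LIMSEQ_unique by blast
next
  fix x
  have "(\<lambda>k. norm (Z k x)) \<longlonglongrightarrow> norm (Zl x)" by (intro tendsto_intros Zl_lim)
  then have "norm (Zl x) \<le> norm x" by (rule LIMSEQ_le_const2) (simp add: Z_norm)
  then show "norm (Zl x) \<le> norm x * 1" by simp
qed

lemma Zl_herm: "herm Zl"
  unfolding herm_def
proof (intro allI)
  fix u v
  have "(\<lambda>k. cinner (Z k u) v) \<longlonglongrightarrow> cinner (Zl u) v"
    by (intro tendsto_cinner Zl_lim tendsto_const)
  moreover have "(\<lambda>k. cinner u (Z k v)) \<longlonglongrightarrow> cinner u (Zl v)"
    by (intro tendsto_cinner Zl_lim tendsto_const)
  moreover have "cinner (Z k u) v = cinner u (Z k v)" for k using Z_herm by (simp add: herm_def)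
  ultimately show "cinner (Zl u) v = cinner u (Zl v)" using LIMSEQ_unique by fastforce
qed

lemma Zl_re: "0 \<le> Re (cinner x (Zl x))" "Re (cinner x (Zl x)) \<le> (norm x)^2"
proof -
  have "(\<lambda>k. Re (cinner x (Z k x))) \<longlonglongrightarrow> Re (cinner x (Zl x))"
    by (intro tendsto_intros tendsto_cinner Zl_lim tendsto_const)
  then show "0 \<le> Re (cinner x (Zl x))" "Re (cinner x (Zl x)) \<le> (norm x)^2"
    using Z_pos Z_le by (auto intro: LIMSEQ_le_const LIMSEQ_le_const2 simp: posf_def)
qed

lemma Zl_fix: "Zl x = scaleR (1/2) (B x + Zl (Zl x))"
proof -
  have "(\<lambda>k. Z k (Z k x) - Zl (Zl x)) \<longlonglongrightarrow> 0"
  proof -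
    have e: "Z k (Z k x) - Zl (Zl x) = Z k (Z k x - Zl x) + (Z k (Zl x) - Zl (Zl x))" for k
      by (simp add: bcl_diff[OF Z_bcl])
    have t1: "(\<lambda>k. Z k (Z k x - Zl x)) \<longlonglongrightarrow> 0"
    proof (rule tendsto_0_le[where K=1])
      show "(\<lambda>k. Z k x - Zl x) \<longlonglongrightarrow> 0" using Zl_lim[of x] by (simp add: LIM_zero)
      show "\<forall>\<^sub>F k in sequentially. norm (Z k (Z k x - Zl x)) \<le> norm (Z k x - Zl x) * 1"
        by (simp add: Z_norm)
    qed
    have t2: "(\<lambda>k. Z k (Zl x) - Zl (Zl x)) \<longlonglongrightarrow> 0" using Zl_lim[of "Zl x"] by (simp add: LIM_zero)
    show ?thesis unfolding e using tendsto_add[OF t1 t2] by simp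
  qed
  then have "(\<lambda>k. Z k (Z k x)) \<longlonglongrightarrow> Zl (Zl x)" by (simp add: LIM_zero_iff)
  then have "(\<lambda>k. Z (Suc k) x) \<longlonglongrightarrow> scaleR (1/2) (B x + Zl (Zl x))"
    unfolding Z_Suc by (intro tendsto_intros)
  moreover have "(\<lambda>k. Z (Suc k) x) \<longlonglongrightarrow> Zl x" using Zl_lim LIMSEQ_Suc by blast
  ultimately show ?thesis using LIMSEQ_unique by blast
qed

lemma Zl_comm: assumes C: "bounded_clinear C" and cb: "\<And>x. C (B x) = B (C x)"
  shows "C (Zl x) = Zl (C x)"
proof -
  have "(\<lambda>k. C (Z k x)) \<longlonglongrightarrow> C (Zl x)" by (rule bcl_tendsto[OF C Zl_lim])
  then have "(\<lambda>k. Z k (C x)) \<longlonglongrightarrow> C (Zl x)" by (simp add: Z_comm[OF C cb])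
  then show ?thesis using Zl_lim LIMSEQ_unique by blast
qed

definition Hs :: "'a \<Rightarrow> 'a" where "Hs x = x - Zl x"

lemma Hs_bcl: "bounded_clinear Hs"
  unfolding Hs_def[abs_def] by (intro bcl_minus bcl_id Zl_bcl)

lemma Hs_herm: "herm Hs"
  using Zl_herm by (simp add: herm_def Hs_def cinner_diff_left cinner_diff_right)

lemma Hs_pos: "positive_op Hs"
  unfolding positive_op_def
proof (intro conjI allI Hs_bcl)
  fix x
  show "Im (cinner x (Hs x)) = 0" by (rule herm_Im[OF Hs_herm])
  have "Re (cinner x (Hs x)) = (norm x)^2 - Re (cinner x (Zl x))"
    by (simp add: Hs_def cinner_diff_right Re_cinner_self)
  then show "0 \<le> Re (cinner x (Hs x))" using Zl_re(2)[of x] by simp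
qed

lemma Hs_posf: "posf Hs" using Hs_pos by (simp add: positive_op_def posf_def)

lemma Hs_sq: "Hs (Hs x) = x - B x"
proof -
  have f: "Zl (Zl x) = scaleR 2 (Zl x) - B x"
  proof -
    have "scaleR 2 (Zl x) = B x + Zl (Zl x)"
      by (subst Zl_fix[of x]) simp
    then show ?thesis by (metis add_diff_cancel_left')
  qed
  show ?thesis unfolding Hs_def by (simp add: bcl_diff[OF Zl_bcl] f scaleR_2 algebra_simps)
qed

lemma Hs_comm: assumes C: "bounded_clinear C" and cb: "\<And>x. C (B x) = B (C x)"
  shows "C (Hs x) = Hs (C x)"
  by (simp add: Hs_def bcl_diff[OF C] Zl_comm[OF C cb])

lemma Hs_unique:
  assumes Cp: "positive_op C" and Csq: "C \<circ> C = (\<lambda>x. x - B x)"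
  shows "C = Hs"
proof -
  have C: "bounded_clinear C" using Cp by (simp add: positive_op_def)
  have Ch: "herm C" by (rule polarization_herm[OF C]) (use Cp in \<open>simp add: positive_op_def\<close>)
  have Cpos: "posf C" using Cp by (simp add: positive_op_def posf_def)
  have CC: "C (C x) = x - B x" for x using Csq by (metis comp_apply)
  have cb: "C (B x) = B (C x)" for x
  proof -
    have "C (C (C x)) = C x - B (C x)" by (rule CC)
    moreover have "C (C (C x)) = C (x - B x)" by (simp add: CC)
    ultimately show ?thesis by (simp add: bcl_diff[OF C])
  qed
  have CH: "C (Hs x) = Hs (C x)" for x by (rule Hs_comm[OF C cb])
  show ?thesis
  proof (rule ext)
    fix x
    define y where "y = C x - Hs x"
    have sum0: "C y + Hs y = 0"
      by (simp add: y_def bcl_diff[OF C] bcl_diff[OF Hs_bcl] CC Hs_sq CH)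
    have "Re (cinner y (C y)) + Re (cinner y (Hs y)) = Re (cinner y (C y + Hs y))"
      by (simp add: cinner_add_right)
    also have "\<dots> = 0" by (simp add: sum0)
    finally have s: "Re (cinner y (C y)) + Re (cinner y (Hs y)) = 0" .
    have a: "0 \<le> Re (cinner y (C y))" using Cpos by (simp add: posf_def)
    have b: "0 \<le> Re (cinner y (Hs y))" using Hs_posf by (simp add: posf_def)
    have Cy: "C y = 0" by (rule cs_zero[OF C Ch Cpos]) (use s a b in linarith)
    have Hy: "Hs y = 0" by (rule cs_zero[OF Hs_bcl Hs_herm Hs_posf]) (use s a b in linarith)
    have "cinner y y = cinner x (C y - Hs y)"
      using Ch Hs_herm by (simp add: y_def herm_def cinner_diff_left cinner_diff_right bcl_diff[OF C] bcl_diff[OF Hs_bcl])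
    also have "\<dots> = 0" by (simp add: Cy Hy)
    finally have "y = 0" by (simp add: cinner_eq_zero_iff)
    then show "C x = Hs x" by (simp add: y_def)
  qed
qed

lemma op_sqrt_eq: "op_sqrt (\<lambda>x. x - B x) = Hs"
  unfolding op_sqrt_def
proof (rule the_equality)
  show "positive_op Hs \<and> Hs \<circ> Hs = (\<lambda>x. x - B x)" using Hs_pos Hs_sq by (auto simp: fun_eq_iff)
  show "\<And>C. positive_op C \<and> C \<circ> C = (\<lambda>x. x - B x) \<Longrightarrow> C = Hs" using Hs_unique by blast
qed

end


lemma cinner_sum_right: "cinner x (sum f A) = (\<Sum>i\<in>A. cinner x (f i :: 'a::complex_inner))"
  by (induction A rule: infinite_finite_induct) (simp_all add: cinner_add_right)

lemma cinner_sum_left: "cinner (sum f A) y = (\<Sum>i\<in>A. cinner (f i :: 'a::complex_inner) y)"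
  by (induction A rule: infinite_finite_induct) (simp_all add: cinner_add_left)

lemma csubspace_range: "bounded_clinear T \<Longrightarrow> csubspace (range T)"
  unfolding csubspace_def
proof (intro conjI ballI allI)
  assume T: "bounded_clinear T"
  show "0 \<in> range T" using bcl_0[OF T] by (metis rangeI)
  fix x y assume "x \<in> range T" "y \<in> range T"
  then obtain a b where "x = T a" "y = T b" by blast
  then have "x + y = T (a + b)" using bcl_add[OF T] by simp
  then show "x + y \<in> range T" by simp
next
  fix c x assume T: "bounded_clinear T" and "x \<in> range T"
  then obtain a where "x = T a" by blast
  then have "scaleC c x = T (scaleC c a)" using bcl_scaleC[OF T] by simp
  then show "scaleC c x \<in> range T" by simp
qed

lemma csubspace_closure:
  fixes S :: "'a::complex_inner set"
  assumes S: "csubspace S"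
  shows "csubspace (closure S)"
  unfolding csubspace_def
proof (intro conjI ballI allI)
  show "0 \<in> closure S" using S closure_subset csubspace_0 by blast
  fix x y assume x: "x \<in> closure S" and y: "y \<in> closure S"
  obtain f where f: "\<And>n. f n \<in> S" "f \<longlonglongrightarrow> x" using x unfolding closure_sequential by blast
  obtain g where g: "\<And>n. g n \<in> S" "g \<longlonglongrightarrow> y" using y unfolding closure_sequential by blast
  have "(\<lambda>n. f n + g n) \<longlonglongrightarrow> x + y" by (intro tendsto_add f g)
  moreover have "\<And>n. f n + g n \<in> S" using S f g csubspace_add by blast
  ultimately show "x + y \<in> closure S" unfolding closure_sequential by (intro exI[of _ "\<lambda>n. f n + g n"]) blast
next
  fix c x assume x: "x \<in> closure S"
  obtain f where f: "\<And>n. f n \<in> S" "f \<longlonglongrightarrow> x" using x unfolding closure_sequential by blast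
  have "(\<lambda>n. scaleC c (f n)) \<longlonglongrightarrow> scaleC c x" by (rule bcl_tendsto[OF bcl_scaleC_op f(2)])
  moreover have "\<And>n. scaleC c (f n) \<in> S" using S f csubspace_scaleC by blast
  ultimately show "scaleC c x \<in> closure S" unfolding closure_sequential by (intro exI[of _ "\<lambda>n. scaleC c (f n)"]) blast
qed

definition projM :: "'a::complex_inner set \<Rightarrow> 'a \<Rightarrow> 'a" where
  "projM M z = (SOME p. p \<in> M \<and> (\<forall>m\<in>M. cinner m (z - p) = 0))"

locale closed_sub =
  fixes M :: "'a::chilbert_space set"
  assumes sub: "csubspace M" and cl: "closed M"
begin

lemma proj_spec: "projM M z \<in> M \<and> (\<forall>m\<in>M. cinner m (z - projM M z) = 0)"
  unfolding projM_def using proj_exists[OF sub cl, of z] by (rule someI2_bex) blast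

lemma proj_in: "projM M z \<in> M" using proj_spec by blast
lemma proj_orth: "m \<in> M \<Longrightarrow> cinner m (z - projM M z) = 0" using proj_spec by blast

lemma proj_unique:
  assumes p: "p \<in> M" and o: "\<And>m. m \<in> M \<Longrightarrow> cinner m (z - p) = 0"
  shows "projM M z = p"
proof -
  have d: "projM M z - p \<in> M" using p proj_in sub csubspace_diff by blast
  have "cinner (projM M z - p) (projM M z - p) = cinner (projM M z - p) (z - p) - cinner (projM M z - p) (z - projM M z)"
    by (simp add: cinner_diff_right)
  also have "\<dots> = 0" using o[OF d] proj_orth[OF d] by simp
  finally show ?thesis by (simp add: cinner_eq_zero_iff)
qed

lemma proj_id: "m \<in> M \<Longrightarrow> projM M m = m"
  by (rule proj_unique) auto

lemma proj_bcl: "bounded_clinear (projM M)"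
proof (rule bcl_intro[of _ 1])
  fix x y
  show "projM M (x + y) = projM M x + projM M y"
  proof (rule proj_unique)
    show "projM M x + projM M y \<in> M" by (rule csubspace_add[OF sub proj_in proj_in])
    fix m assume m: "m \<in> M"
    have e: "x + y - (projM M x + projM M y) = (x - projM M x) + (y - projM M y)" by simp
    show "cinner m (x + y - (projM M x + projM M y)) = 0"
      unfolding e cinner_add_right using proj_orth[OF m, of x] proj_orth[OF m, of y] by simp
  qed
next
  fix c x
  show "projM M (scaleC c x) = scaleC c (projM M x)"
  proof (rule proj_unique)
    show "scaleC c (projM M x) \<in> M" by (rule csubspace_scaleC[OF sub proj_in])
    fix m assume m: "m \<in> M"
    have "cinner m (scaleC c x - scaleC c (projM M x)) = c * cinner m (x - projM M x)"
      by (simp add: scaleC_diff_right[symmetric] cinner_scaleC_right)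
    then show "cinner m (scaleC c x - scaleC c (projM M x)) = 0" using proj_orth[OF m] by simp
  qed
next
  fix z
  define p where "p = projM M z"
  have o1: "cinner p (z - p) = 0" using proj_orth[OF proj_in] by (simp add: p_def)
  have o2: "cinner (z - p) p = 0" using o1 by (metis cinner_commute complex_cnj_zero)
  have "cinner z z = cinner p p + cinner (z - p) (z - p)"
  proof -
    have "z = p + (z - p)" by simp
    then have "cinner z z = cinner (p + (z - p)) (p + (z - p))" by simp
    also have "\<dots> = cinner p p + cinner p (z - p) + cinner (z - p) p + cinner (z - p) (z - p)"
      by (simp only: cinner_add_left cinner_add_right add_ac)
    finally show ?thesis using o1 o2 by simp
  qed
  then have "(norm z)^2 = (norm p)^2 + (norm (z - p))^2"
    by (metis Re_cinner_self plus_complex.sel(1))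
  then have "(norm p)^2 \<le> (norm z)^2" by simp
  then have "norm p \<le> norm z" by (rule power2_le_imp_le) simp
  then show "norm (projM M z) \<le> norm z * 1" by (simp add: p_def)
qed

lemma proj_norm: "norm (projM M z) \<le> norm z"
proof -
  obtain K where "\<And>x. norm (projM M x) \<le> norm x * K" using proj_bcl by (auto simp: bounded_clinear_def)
  define p where "p = projM M z"
  have o1: "cinner p (z - p) = 0" using proj_orth[OF proj_in] by (simp add: p_def)
  have o2: "cinner (z - p) p = 0" using o1 by (metis cinner_commute complex_cnj_zero)
  have "cinner z z = cinner (p + (z - p)) (p + (z - p))" by simp
  also have "\<dots> = cinner p p + cinner p (z - p) + cinner (z - p) p + cinner (z - p) (z - p)"
    by (simp only: cinner_add_left cinner_add_right add_ac)
  finally have "cinner z z = cinner p p + cinner (z - p) (z - p)" using o1 o2 by simp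
  then have "(norm z)^2 = (norm p)^2 + (norm (z - p))^2"
    by (metis Re_cinner_self plus_complex.sel(1))
  then have "(norm p)^2 \<le> (norm z)^2" by simp
  then show ?thesis unfolding p_def[symmetric] by (rule power2_le_imp_le) simp
qed

lemma proj_herm: "herm (projM M)"
  unfolding herm_def
proof (intro allI)
  fix u v
  have a: "cinner (projM M u) v = cinner (projM M u) (projM M v)"
    using proj_orth[OF proj_in, of u v] by (simp add: cinner_diff_right)
  have "cinner (u - projM M u) (projM M v) = 0"
    using proj_orth[OF proj_in, of v u] by (metis cinner_commute complex_cnj_zero)
  then have b: "cinner u (projM M v) = cinner (projM M u) (projM M v)"
    by (simp add: cinner_diff_left)
  show "cinner (projM M u) v = cinner u (projM M v)" using a b by simp
qed

lemma proj_orthproj: "is_orth_proj (projM M)"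
  unfolding is_orth_proj_def
proof (intro conjI proj_bcl)
  show "projM M \<circ> projM M = projM M" by (auto simp: fun_eq_iff proj_id proj_in)
  show "cadjoint (projM M) = projM M" by (rule cadjoint_eqI) (use proj_herm in \<open>simp add: herm_def\<close>)
qed

lemma proj_range: "range (projM M) = M"
  using proj_in proj_id by (auto simp: image_iff) (metis)

lemma range_proj_eq: assumes "closure (range A) = M" shows "range_proj A = projM M"
  unfolding range_proj_def
proof (rule the_equality)
  show "is_orth_proj (projM M) \<and> range (projM M) = closure (range A)"
    using proj_orthproj proj_range assms by simp
  fix Q assume Q: "is_orth_proj Q \<and> range Q = closure (range A)"
  have Qb: "bounded_clinear Q" and QQ: "Q \<circ> Q = Q" and Qa: "cadjoint Q = Q" and QM: "range Q = M"
    using Q assms by (auto simp: is_orth_proj_def)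
  have Qh: "cinner (Q a) b = cinner a (Q b)" for a b
    using cadjoint_prop[OF Qb, of a b] Qa by simp
  show "Q = projM M"
  proof (rule ext)
    fix z
    show "Q z = projM M z"
    proof (rule proj_unique[symmetric])
      show "Q z \<in> M" using QM by blast
      fix m assume "m \<in> M"
      then obtain m' where m: "m = Q m'" using QM by blast
      have "cinner m (z - Q z) = cinner m' (Q z - Q (Q z))"
        by (simp add: m Qh cinner_diff_right)
      also have "Q (Q z) = Q z" using QQ by (metis comp_apply)
      finally show "cinner m (z - Q z) = 0" by simp
    qed
  qed
qed

end



definition extF :: "('a::complex_inner \<Rightarrow> 'a) \<Rightarrow> ('a \<Rightarrow> 'a) \<Rightarrow> 'a \<Rightarrow> 'a" where
  "extF H F w = (THE L. \<forall>x. (\<lambda>k. H (x k)) \<longlonglongrightarrow> w \<longrightarrow> (\<lambda>k. F (x k)) \<longlonglongrightarrow> L)"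

locale dom_pair =
  fixes H F :: "'a::chilbert_space \<Rightarrow> 'a"
  assumes H: "bounded_clinear H" and F: "bounded_clinear F"
    and dom: "\<And>x. norm (F x) \<le> norm (H x)"
begin

lemma seq_exists: "w \<in> closure (range H) \<Longrightarrow> \<exists>x. (\<lambda>k. H (x k)) \<longlonglongrightarrow> w"
proof -
  assume "w \<in> closure (range H)"
  then obtain s where s: "\<And>n. s n \<in> range H" "s \<longlonglongrightarrow> w" unfolding closure_sequential by blast
  then have "\<forall>n. \<exists>a. s n = H a" by blast
  then obtain x where xs: "\<And>n. s n = H (x n)" by metis
  then have "s = (\<lambda>k. H (x k))" by (simp add: fun_eq_iff)
  then show ?thesis using s(2) by blast
qed

lemma F_close: assumes "(\<lambda>k. H (x k) - H (y k)) \<longlonglongrightarrow> 0"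
  shows "(\<lambda>k. F (x k) - F (y k)) \<longlonglongrightarrow> 0"
proof (rule tendsto_0_le[OF assms, where K=1])
  show "\<forall>\<^sub>F k in sequentially. norm (F (x k) - F (y k)) \<le> norm (H (x k) - H (y k)) * 1"
    using dom by (simp add: bcl_diff[OF F, symmetric] bcl_diff[OF H, symmetric])
qed

lemma ext_prop:
  assumes w: "w \<in> closure (range H)" and x: "(\<lambda>k. H (x k)) \<longlonglongrightarrow> w"
  shows "(\<lambda>k. F (x k)) \<longlonglongrightarrow> extF H F w"
proof -
  obtain x0 where x0: "(\<lambda>k. H (x0 k)) \<longlonglongrightarrow> w" using seq_exists[OF w] by blast
  have "Cauchy (\<lambda>k. F (x0 k))"
  proof (rule metric_CauchyI)
    fix e :: real assume e: "0 < e"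
    have "Cauchy (\<lambda>k. H (x0 k))" using x0 by (rule LIMSEQ_imp_Cauchy)
    then obtain N where N: "\<And>m n. N \<le> m \<Longrightarrow> N \<le> n \<Longrightarrow> dist (H (x0 m)) (H (x0 n)) < e"
      using e unfolding Cauchy_def by blast
    show "\<exists>M. \<forall>m\<ge>M. \<forall>n\<ge>M. dist (F (x0 m)) (F (x0 n)) < e"
    proof (intro exI allI impI)
      fix m n assume "N \<le> m" "N \<le> n"
      then have "dist (H (x0 m)) (H (x0 n)) < e" by (rule N)
      moreover have "dist (F (x0 m)) (F (x0 n)) \<le> dist (H (x0 m)) (H (x0 n))"
        using dom[of "x0 m - x0 n"] by (simp add: dist_norm bcl_diff[OF F] bcl_diff[OF H])
      ultimately show "dist (F (x0 m)) (F (x0 n)) < e" by simp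
    qed
  qed
  then obtain L where L: "(\<lambda>k. F (x0 k)) \<longlonglongrightarrow> L" using Cauchy_convergent_iff convergent_def by blast
  have P: "(\<lambda>k. F (y k)) \<longlonglongrightarrow> L" if y: "(\<lambda>k. H (y k)) \<longlonglongrightarrow> w" for y
  proof -
    have "(\<lambda>k. H (y k) - H (x0 k)) \<longlonglongrightarrow> w - w" by (intro tendsto_diff y x0)
    then have "(\<lambda>k. F (y k) - F (x0 k)) \<longlonglongrightarrow> 0" using F_close by simp
    from tendsto_add[OF this L] show ?thesis by simp
  qed
  have "extF H F w = L"
    unfolding extF_def
  proof (rule the_equality)
    show "\<forall>y. (\<lambda>k. H (y k)) \<longlonglongrightarrow> w \<longrightarrow> (\<lambda>k. F (y k)) \<longlonglongrightarrow> L" using P by blast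
    fix L' assume "\<forall>y. (\<lambda>k. H (y k)) \<longlonglongrightarrow> w \<longrightarrow> (\<lambda>k. F (y k)) \<longlonglongrightarrow> L'"
    then have "(\<lambda>k. F (x0 k)) \<longlonglongrightarrow> L'" using x0 by blast
    then show "L' = L" using L LIMSEQ_unique by blast
  qed
  then show ?thesis using P[OF x] by simp
qed

lemma ext_H: "extF H F (H x) = F x"
proof -
  have "(\<lambda>k. F x) \<longlonglongrightarrow> extF H F (H x)"
    using ext_prop[of "H x" "\<lambda>k. x"] by (simp add: closure_subset[THEN subsetD])
  then show ?thesis using LIMSEQ_unique tendsto_const by blast
qed

lemma ext_add: assumes "w \<in> closure (range H)" "w' \<in> closure (range H)"
  shows "extF H F (w + w') = extF H F w + extF H F w'"
proof -
  obtain x where x: "(\<lambda>k. H (x k)) \<longlonglongrightarrow> w" using seq_exists assms(1) by blast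
  obtain y where y: "(\<lambda>k. H (y k)) \<longlonglongrightarrow> w'" using seq_exists assms(2) by blast
  have wc: "w + w' \<in> closure (range H)"
    using csubspace_closure[OF csubspace_range[OF H]] assms csubspace_add by blast
  have "(\<lambda>k. H (x k + y k)) \<longlonglongrightarrow> w + w'" using tendsto_add[OF x y] by (simp add: bcl_add[OF H])
  then have "(\<lambda>k. F (x k + y k)) \<longlonglongrightarrow> extF H F (w + w')" by (rule ext_prop[OF wc])
  moreover have "(\<lambda>k. F (x k + y k)) \<longlonglongrightarrow> extF H F w + extF H F w'"
    using tendsto_add[OF ext_prop[OF assms(1) x] ext_prop[OF assms(2) y]] by (simp add: bcl_add[OF F])
  ultimately show ?thesis using LIMSEQ_unique by blast
qed

lemma ext_scaleC: assumes "w \<in> closure (range H)"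
  shows "extF H F (scaleC c w) = scaleC c (extF H F w)"
proof -
  obtain x where x: "(\<lambda>k. H (x k)) \<longlonglongrightarrow> w" using seq_exists assms(1) by blast
  have wc: "scaleC c w \<in> closure (range H)"
    using csubspace_closure[OF csubspace_range[OF H]] assms csubspace_scaleC by blast
  have "(\<lambda>k. H (scaleC c (x k))) \<longlonglongrightarrow> scaleC c w"
    using bcl_tendsto[OF bcl_scaleC_op x] by (simp add: bcl_scaleC[OF H])
  then have "(\<lambda>k. F (scaleC c (x k))) \<longlonglongrightarrow> extF H F (scaleC c w)" by (rule ext_prop[OF wc])
  moreover have "(\<lambda>k. F (scaleC c (x k))) \<longlonglongrightarrow> scaleC c (extF H F w)"
    using bcl_tendsto[OF bcl_scaleC_op ext_prop[OF assms x]] by (simp add: bcl_scaleC[OF F])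
  ultimately show ?thesis using LIMSEQ_unique by blast
qed

lemma ext_norm: assumes "w \<in> closure (range H)"
  shows "norm (extF H F w) \<le> norm w"
proof -
  obtain x where x: "(\<lambda>k. H (x k)) \<longlonglongrightarrow> w" using seq_exists assms(1) by blast
  have a: "(\<lambda>k. norm (F (x k))) \<longlonglongrightarrow> norm (extF H F w)" by (intro tendsto_intros ext_prop[OF assms x])
  have b: "(\<lambda>k. norm (H (x k))) \<longlonglongrightarrow> norm w" by (intro tendsto_intros x)
  show ?thesis by (rule LIMSEQ_le[OF a b]) (simp add: dom)
qed

lemma ext_comm:
  assumes w: "w \<in> closure (range H)" and A: "bounded_clinear A"
    and AH: "\<And>x. A (H x) = H (A x)" and AF: "\<And>x. A (F x) = F (A x)"
  shows "A w \<in> closure (range H)" "extF H F (A w) = A (extF H F w)"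
proof -
  obtain x where x: "(\<lambda>k. H (x k)) \<longlonglongrightarrow> w" using seq_exists w by blast
  have Ax: "(\<lambda>k. H (A (x k))) \<longlonglongrightarrow> A w" using bcl_tendsto[OF A x] by (simp add: AH)
  show Aw: "A w \<in> closure (range H)"
    unfolding closure_sequential by (intro exI[of _ "\<lambda>k. H (A (x k))"]) (use Ax in auto)
  have "(\<lambda>k. F (A (x k))) \<longlonglongrightarrow> extF H F (A w)" by (rule ext_prop[OF Aw Ax])
  moreover have "(\<lambda>k. F (A (x k))) \<longlonglongrightarrow> A (extF H F w)"
    using bcl_tendsto[OF A ext_prop[OF w x]] by (simp add: AF)
  ultimately show "extF H F (A w) = A (extF H F w)" using LIMSEQ_unique by blast
qed

end



lemma commutant_adj:
  fixes R :: "('a::chilbert_space \<Rightarrow> 'a) set"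
  assumes vn: "von_neumann_algebra R" and A: "A \<in> commutant R"
  shows "cadjoint A \<in> commutant R"
proof -
  have Rb: "\<And>X. X \<in> R \<Longrightarrow> bounded_clinear X" using vn by (auto simp: von_neumann_algebra_def)
  have adjR: "\<And>X. X \<in> R \<Longrightarrow> cadjoint X \<in> R" using vn by (auto simp: von_neumann_algebra_def)
  have Ab: "bounded_clinear A" and Ac: "\<And>X x. X \<in> R \<Longrightarrow> A (X x) = X (A x)"
    using A by (auto simp: commutant_def fun_eq_iff)
  show ?thesis unfolding commutant_def
  proof (intro CollectI conjI ballI cadjoint_bcl[OF Ab])
    fix X assume X: "X \<in> R"
    have Xb: "bounded_clinear X" by (rule Rb[OF X])
    show "cadjoint A \<circ> X = X \<circ> cadjoint A"
    proof (rule ext, rule cinner_ext)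
      fix u v
      have "cinner ((cadjoint A \<circ> X) u) v = cinner (X u) (A v)"
        by (simp add: cadjoint_prop[OF Ab])
      moreover have "cinner ((X \<circ> cadjoint A) u) v = cinner (X u) (A v)"
      proof -
        have "cinner ((X \<circ> cadjoint A) u) v = cinner (cadjoint A u) (cadjoint X v)"
          by (simp add: cadjoint_prop'[OF Xb])
        also have "\<dots> = cinner u (A (cadjoint X v))" by (simp add: cadjoint_prop[OF Ab])
        also have "A (cadjoint X v) = cadjoint X (A v)" by (rule Ac[OF adjR[OF X]])
        also have "cinner u (cadjoint X (A v)) = cinner (X u) (A v)" by (simp add: cadjoint_prop'[OF Xb])
        finally show ?thesis .
      qed
      ultimately show "cinner ((cadjoint A \<circ> X) u) v = cinner ((X \<circ> cadjoint A) u) v" by simp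
    qed
  qed
qed

lemma seq_exists_gen:
  fixes H :: "'a::chilbert_space \<Rightarrow> 'a"
  shows "w \<in> closure (range H) \<Longrightarrow> \<exists>x. (\<lambda>k. H (x k)) \<longlonglongrightarrow> w"
proof -
  assume "w \<in> closure (range H)"
  then obtain s where s: "\<And>n. s n \<in> range H" "s \<longlonglongrightarrow> w" unfolding closure_sequential by blast
  then have "\<forall>n. \<exists>a. s n = H a" by blast
  then obtain x where xs: "\<And>n. s n = H (x n)" by metis
  then have "s = (\<lambda>k. H (x k))" by (simp add: fun_eq_iff)
  then show ?thesis using s(2) by blast
qed

lemma ext_sum_inner:
  fixes H :: "'a::chilbert_space \<Rightarrow> 'a" and Tf :: "nat \<Rightarrow> 'a \<Rightarrow> 'a"
  assumes dp: "\<And>i. i \<in> I \<Longrightarrow> dom_pair H (Tf i)"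
    and ident: "\<And>x y. (\<Sum>i\<in>I. cinner (Tf i x) (Tf i y)) = cinner (H x) (H y)"
    and w: "w \<in> closure (range H)" and w': "w' \<in> closure (range H)"
  shows "(\<Sum>i\<in>I. cinner (extF H (Tf i) w) (extF H (Tf i) w')) = cinner w w'"
proof -
  obtain x where x: "(\<lambda>k. H (x k)) \<longlonglongrightarrow> w" using seq_exists_gen[OF w] by blast
  obtain y where y: "(\<lambda>k. H (y k)) \<longlonglongrightarrow> w'" using seq_exists_gen[OF w'] by blast
  have "(\<lambda>k. \<Sum>i\<in>I. cinner (Tf i (x k)) (Tf i (y k))) \<longlonglongrightarrow> (\<Sum>i\<in>I. cinner (extF H (Tf i) w) (extF H (Tf i) w'))"
    by (intro tendsto_sum tendsto_cinner dom_pair.ext_prop[OF dp] w w' x y)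
  moreover have "(\<lambda>k. \<Sum>i\<in>I. cinner (Tf i (x k)) (Tf i (y k))) \<longlonglongrightarrow> cinner w w'"
    unfolding ident by (intro tendsto_cinner x y)
  ultimately show ?thesis using LIMSEQ_unique by blast
qed



theorem lemma3p20:
  fixes R :: "('a::chilbert_space \<Rightarrow> 'a) set"
    and T :: "nat \<Rightarrow> 'a \<Rightarrow> 'a"
    and n :: nat
  assumes "von_neumann_algebra R"
    and "n \<ge> 2"
    and "\<forall>i\<in>{1..n}. T i \<in> R"
    and "(\<lambda>x. \<Sum>i=1..n. cadjoint (T i) (T i x)) = id"
  shows "\<exists>S :: nat \<Rightarrow> 'a \<Rightarrow> 'a.
           (\<forall>i\<in>{1..n-1}. S i \<in> R) \<and>
           (\<forall>i\<in>{1..n-1}. T i = S i \<circ> op_sqrt (\<lambda>x. x - cadjoint (T n) (T n x))) \<and>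
           (\<lambda>x. \<Sum>i=1..n-1. cadjoint (S i) (S i x))
             = range_proj (op_sqrt (\<lambda>x. x - cadjoint (T n) (T n x)))"
proof -
  note vn = assms(1)
  have Rb: "\<And>X. X \<in> R \<Longrightarrow> bounded_clinear X" using vn by (auto simp: von_neumann_algebra_def)
  have adjR: "\<And>X. X \<in> R \<Longrightarrow> cadjoint X \<in> R" using vn by (auto simp: von_neumann_algebra_def)
  have dc: "commutant (commutant R) = R" using vn by (simp add: von_neumann_algebra_def)
  define I where "I = {1..n-1}"
  have nI: "n \<notin> I" and In: "{1..n} = insert n I" and finI: "finite I" and IT: "\<And>i. i \<in> I \<Longrightarrow> T i \<in> R"
    using assms(2,3) by (auto simp: I_def)
  have TnR: "T n \<in> R" using assms(2,3) by auto
  have Tb: "\<And>i. i \<in> I \<Longrightarrow> bounded_clinear (T i)" using IT Rb by blast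
  have Tnb: "bounded_clinear (T n)" using TnR Rb by blast
  define B where "B x = cadjoint (T n) (T n x)" for x
  have split: "x = B x + (\<Sum>i\<in>I. cadjoint (T i) (T i x))" for x
  proof -
    have "x = (\<Sum>i=1..n. cadjoint (T i) (T i x))" using assms(4) by (metis id_apply)
    also have "\<dots> = B x + (\<Sum>i\<in>I. cadjoint (T i) (T i x))"
      unfolding In using nI finI by (simp add: B_def)
    finally show ?thesis .
  qed
  have Tsq: "cinner x (cadjoint (T i) (T i y)) = cinner (T i x) (T i y)" if "bounded_clinear (T i)" for i x y
    by (rule cadjoint_prop'[OF that])
  have Beq: "B = (\<lambda>x. cadjoint (T n) (T n x))" by (simp add: fun_eq_iff B_def)
  have Bb: "bounded_clinear B" unfolding Beq by (rule bcl_comp[OF cadjoint_bcl[OF Tnb] Tnb])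
  have Bh: "herm B" unfolding herm_def B_def
    by (simp add: cadjoint_prop[OF Tnb] cadjoint_prop'[OF Tnb])
  have Bre: "Re (cinner x (B x)) = (norm (T n x))^2" for x
    by (simp add: B_def Tsq[OF Tnb] Re_cinner_self)
  have Bp: "posf B" by (simp add: posf_def Bre)
  have Ire: "Re (cinner x (\<Sum>i\<in>I. cadjoint (T i) (T i x))) = (\<Sum>i\<in>I. (norm (T i x))^2)" for x
    by (simp add: cinner_sum_right Tsq[OF Tb] Re_cinner_self)
  have Ble: "Re (cinner x (B x)) \<le> (norm x)^2" for x
  proof -
    have "(norm x)^2 = Re (cinner x (B x + (\<Sum>i\<in>I. cadjoint (T i) (T i x))))"
      using split[of x] by (metis Re_cinner_self)
    also have "\<dots> = Re (cinner x (B x)) + (\<Sum>i\<in>I. (norm (T i x))^2)"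
      by (simp add: cinner_add_right Ire)
    finally show ?thesis by (smt (verit) sum_nonneg zero_le_power2)
  qed
  interpret sqB B using Bb Bh Bp Ble by unfold_locales auto
  have sqrt_eq: "op_sqrt (\<lambda>x. x - cadjoint (T n) (T n x)) = Hs"
    using op_sqrt_eq by (simp add: B_def)
  have HsHs: "Hs (Hs x) = (\<Sum>i\<in>I. cadjoint (T i) (T i x))" for x
    using Hs_sq[of x] split[of x] by (metis add_diff_cancel_left')
  have ident: "(\<Sum>i\<in>I. cinner (T i x) (T i y)) = cinner (Hs x) (Hs y)" for x y
  proof -
    have "cinner (Hs x) (Hs y) = cinner x (Hs (Hs y))" using Hs_herm by (simp add: herm_def)
    also have "\<dots> = (\<Sum>i\<in>I. cinner (T i x) (T i y))"
      by (simp add: HsHs cinner_sum_right Tsq[OF Tb])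
    finally show ?thesis by simp
  qed
  have dom: "norm (T i x) \<le> norm (Hs x)" if i: "i \<in> I" for i x
  proof -
    have "(norm (Hs x))^2 = Re (cinner (Hs x) (Hs x))" by (simp add: Re_cinner_self)
    also have "\<dots> = (\<Sum>j\<in>I. (norm (T j x))^2)"
      by (simp flip: ident add: Re_cinner_self)
    finally have "(norm (T i x))^2 \<le> (norm (Hs x))^2"
      using member_le_sum[of i I "\<lambda>j. (norm (T j x))^2"] i finI by simp
    then show ?thesis by (rule power2_le_imp_le) simp
  qed
  have dp: "dom_pair Hs (T i)" if "i \<in> I" for i
    using Hs_bcl Tb[OF that] dom[OF that] by unfold_locales auto
  define M where "M = closure (range Hs)"
  interpret cs: closed_sub M unfolding M_def
    by unfold_locales (auto intro: csubspace_closure csubspace_range Hs_bcl)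
  define P where "P = projM M"
  have rp: "range_proj Hs = P" unfolding P_def by (rule cs.range_proj_eq) (simp add: M_def)
  define S where "S i z = extF Hs (T i) (P z)" for i z
  have PM: "P z \<in> M" for z by (simp add: P_def cs.proj_in)
  have HM: "Hs x \<in> M" for x unfolding M_def by (rule closure_subset[THEN subsetD]) simp
  have claim1: "T i = S i \<circ> Hs" if i: "i \<in> I" for i
  proof (rule ext)
    fix x
    have "P (Hs x) = Hs x" by (simp add: P_def cs.proj_id HM)
    then show "T i x = (S i \<circ> Hs) x" by (simp add: S_def dom_pair.ext_H[OF dp[OF i]])
  qed
  have Sb: "bounded_clinear (S i)" if i: "i \<in> I" for i
  proof (rule bcl_intro[of _ 1])
    have Pb: "bounded_clinear P" by (simp add: P_def cs.proj_bcl)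
    fix x y
    show "S i (x + y) = S i x + S i y"
      using dom_pair.ext_add[OF dp[OF i] PM[of x, unfolded M_def] PM[of y, unfolded M_def]]
      by (simp add: S_def bcl_add[OF Pb])
  next
    have Pb: "bounded_clinear P" by (simp add: P_def cs.proj_bcl)
    fix c x
    show "S i (scaleC c x) = scaleC c (S i x)"
      using dom_pair.ext_scaleC[OF dp[OF i] PM[of x, unfolded M_def]]
      by (simp add: S_def bcl_scaleC[OF Pb])
  next
    fix x
    have "norm (S i x) \<le> norm (P x)"
      unfolding S_def by (rule dom_pair.ext_norm[OF dp[OF i] PM[of x, unfolded M_def]])
    also have "\<dots> \<le> norm x" by (simp add: P_def cs.proj_norm)
    finally show "norm (S i x) \<le> norm x * 1" by simp
  qed
  have commB: "A (B x) = B (A x)" if A: "A \<in> commutant R" for A x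
  proof -
    have "\<And>X y. X \<in> R \<Longrightarrow> A (X y) = X (A y)" using A by (auto simp: commutant_def fun_eq_iff)
    then show ?thesis using TnR adjR[OF TnR] by (simp add: B_def)
  qed
  have commA: "A (X y) = X (A y)" if "A \<in> commutant R" "X \<in> R" for A X y
    using that by (auto simp: commutant_def fun_eq_iff)
  have commb: "bounded_clinear A" if "A \<in> commutant R" for A
    using that by (auto simp: commutant_def)
  have claim3: "S i \<in> R" if i: "i \<in> I" for i
  proof -
    have "\<forall>A\<in>commutant R. S i \<circ> A = A \<circ> S i"
    proof
      fix A assume A: "A \<in> commutant R"
      have Ab: "bounded_clinear A" by (rule commb[OF A])
      have A': "cadjoint A \<in> commutant R" by (rule commutant_adj[OF vn A])
      have A'b: "bounded_clinear (cadjoint A)" by (rule commb[OF A'])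
      have AH: "A (Hs x) = Hs (A x)" for x by (rule Hs_comm[OF Ab commB[OF A]])
      have A'H: "cadjoint A (Hs x) = Hs (cadjoint A x)" for x by (rule Hs_comm[OF A'b commB[OF A']])
      have AT: "A (T i x) = T i (A x)" for x by (rule commA[OF A IT[OF i]])
      have A'T: "cadjoint A (T i x) = T i (cadjoint A x)" for x by (rule commA[OF A' IT[OF i]])
      have AMM: "A w \<in> M" if "w \<in> M" for w
        using dom_pair.ext_comm(1)[OF dp[OF i] that[unfolded M_def] Ab AH AT] by (simp add: M_def)
      have A'MM: "cadjoint A w \<in> M" if "w \<in> M" for w
        using dom_pair.ext_comm(1)[OF dp[OF i] that[unfolded M_def] A'b A'H A'T] by (simp add: M_def)
      have AP: "P (A z) = A (P z)" for z
        unfolding P_def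
      proof (rule cs.proj_unique)
        show "A (projM M z) \<in> M" by (rule AMM[OF cs.proj_in])
        fix m assume m: "m \<in> M"
        have "cinner m (A z - A (projM M z)) = cinner (cadjoint A m) (z - projM M z)"
          by (simp add: bcl_diff[OF Ab, symmetric] cadjoint_prop[OF Ab])
        also have "\<dots> = 0" by (rule cs.proj_orth[OF A'MM[OF m]])
        finally show "cinner m (A z - A (projM M z)) = 0" .
      qed
      show "S i \<circ> A = A \<circ> S i"
      proof (rule ext)
        fix z
        have "S i (A z) = extF Hs (T i) (A (P z))" by (simp add: S_def AP)
        also have "\<dots> = A (S i z)"
          using dom_pair.ext_comm(2)[OF dp[OF i] PM[of z, unfolded M_def] Ab AH AT] by (simp add: S_def)
        finally show "(S i \<circ> A) z = (A \<circ> S i) z" by simp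
      qed
    qed
    then have "S i \<in> commutant (commutant R)" using Sb[OF i] by (simp add: commutant_def)
    then show ?thesis using dc by simp
  qed
  have claim4: "(\<lambda>x. \<Sum>i\<in>I. cadjoint (S i) (S i x)) = P"
  proof (rule ext, rule cinner_ext)
    fix x v
    have "cinner (\<Sum>i\<in>I. cadjoint (S i) (S i x)) v = (\<Sum>i\<in>I. cinner (S i x) (S i v))"
      by (simp add: cinner_sum_left cadjoint_prop[OF Sb])
    also have "\<dots> = cinner (P x) (P v)"
      unfolding S_def
      by (rule ext_sum_inner[OF dp ident PM[of x, unfolded M_def] PM[of v, unfolded M_def]])
    also have "\<dots> = cinner (P (P x)) v" using cs.proj_herm by (simp add: herm_def P_def)
    also have "P (P x) = P x" by (simp add: P_def cs.proj_id cs.proj_in)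
    finally show "cinner (\<Sum>i\<in>I. cadjoint (S i) (S i x)) v = cinner (P x) v" .
  qed
  show ?thesis
    using claim1 claim3 claim4 unfolding sqrt_eq rp I_def[symmetric]
    by (intro exI[of _ S]) auto
qed


end
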